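(* For every nice graph $G$ with maximum degree $\Delta=\Delta(G)$, $\chi'_{qm\Sigma}(G)\le \left\lceil \frac{3\Delta+4}{2}\right\rceil$.
   Context: All graphs are simple and finite. A $k$-edge-coloring of $G$ is any map $c:E(G)\to\{1,\dots,k\}$ (adjacent edges may share colors). It induces $\sigma_c(v)=\sum_{u\in N(v)}c(vu)$. The coloring is neighbor sum distinguishing (NSD) if $\sigma_c(u)\ne\sigma_c(v)$ for every edge $uv$. It is quasi-majority if every vertex $v$ is incident to at most $\lceil d(v)/2\rceil$ edges of each single color. $\chi'_{qm\Sigma}(G)$ denotes the least $k$ such that $G$ has a $k$-edge-coloring that is both quasi-majority and NSD. A graph is nice if it has no connected component isomorphic to $K_2$. *)

theory Defs
  imports Complex_Main
begin

definition simple_graph :: "'a set \<Rightarrow> ('a \<Rightarrow> 'a \<Rightarrow> bool) \<Rightarrow> bool" where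
  "simple_graph V E \<longleftrightarrow> finite V \<and> (\<forall>u v. E u v \<longrightarrow> u \<in> V \<and> v \<in> V)
     \<and> (\<forall>u v. E u v \<longrightarrow> E v u) \<and> (\<forall>v. \<not> E v v)"

definition edges :: "'a set \<Rightarrow> ('a \<Rightarrow> 'a \<Rightarrow> bool) \<Rightarrow> 'a set set" where
  "edges V E = {{u, v} | u v. u \<in> V \<and> v \<in> V \<and> E u v}"

definition nbrs :: "'a set \<Rightarrow> ('a \<Rightarrow> 'a \<Rightarrow> bool) \<Rightarrow> 'a \<Rightarrow> 'a set" where
  "nbrs V E v = {u \<in> V. E v u}"

definition deg :: "'a set \<Rightarrow> ('a \<Rightarrow> 'a \<Rightarrow> bool) \<Rightarrow> 'a \<Rightarrow> nat" where
  "deg V E v = card (nbrs V E v)"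

definition max_deg :: "'a set \<Rightarrow> ('a \<Rightarrow> 'a \<Rightarrow> bool) \<Rightarrow> nat" where
  "max_deg V E = Max (insert 0 (deg V E ` V))"

text \<open>Nice: no connected component isomorphic to K2, i.e. no edge uv with both
endpoints of degree 1.\<close>
definition nice :: "'a set \<Rightarrow> ('a \<Rightarrow> 'a \<Rightarrow> bool) \<Rightarrow> bool" where
  "nice V E \<longleftrightarrow> \<not> (\<exists>u v. E u v \<and> deg V E u = 1 \<and> deg V E v = 1)"

definition edge_coloring :: "'a set \<Rightarrow> ('a \<Rightarrow> 'a \<Rightarrow> bool) \<Rightarrow> nat \<Rightarrow> ('a set \<Rightarrow> nat) \<Rightarrow> bool" where
  "edge_coloring V E k c \<longleftrightarrow> (\<forall>e \<in> edges V E. c e \<in> {1..k})"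

definition sigma :: "'a set \<Rightarrow> ('a \<Rightarrow> 'a \<Rightarrow> bool) \<Rightarrow> ('a set \<Rightarrow> nat) \<Rightarrow> 'a \<Rightarrow> nat" where
  "sigma V E c v = (\<Sum>u \<in> nbrs V E v. c {v, u})"

definition nsd :: "'a set \<Rightarrow> ('a \<Rightarrow> 'a \<Rightarrow> bool) \<Rightarrow> ('a set \<Rightarrow> nat) \<Rightarrow> bool" where
  "nsd V E c \<longleftrightarrow> (\<forall>u v. E u v \<longrightarrow> sigma V E c u \<noteq> sigma V E c v)"

definition quasi_majority :: "'a set \<Rightarrow> ('a \<Rightarrow> 'a \<Rightarrow> bool) \<Rightarrow> ('a set \<Rightarrow> nat) \<Rightarrow> bool" where
  "quasi_majority V E c \<longleftrightarrow> (\<forall>v \<in> V. \<forall>i::nat.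
     card {u \<in> nbrs V E v. c {v, u} = i} \<le> nat \<lceil>real (deg V E v) / 2\<rceil>)"

definition qm_nsd_colorable :: "'a set \<Rightarrow> ('a \<Rightarrow> 'a \<Rightarrow> bool) \<Rightarrow> nat \<Rightarrow> bool" where
  "qm_nsd_colorable V E k \<longleftrightarrow>
     (\<exists>c. edge_coloring V E k c \<and> quasi_majority V E c \<and> nsd V E c)"

definition chi_qm_sigma :: "'a set \<Rightarrow> ('a \<Rightarrow> 'a \<Rightarrow> bool) \<Rightarrow> nat" where
  "chi_qm_sigma V E = (LEAST k. qm_nsd_colorable V E k)"

end

theory Submission
  imports Defs
begin

lemma pigeon_img:
  assumes "finite S" "finite Fs" "card Fs < card S" "inj_on f S"
  shows "\<exists>x\<in>S. f x \<notin> Fs"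
proof (rule ccontr)
  assume "\<not> ?thesis"
  then have "f ` S \<subseteq> Fs" by auto
  then have "card (f ` S) \<le> card Fs" using assms(2) by (simp add: card_mono)
  moreover have "card (f ` S) = card S" using assms(4) by (simp add: card_image)
  ultimately show False using assms(3) by simp
qed

lemma sum_unres:
  fixes A B Fs :: "nat set"
  assumes "finite A" "finite B" "finite Fs" "A \<noteq> {}" "B \<noteq> {}"
    "card Fs + 2 \<le> card A + card B"
  shows "\<exists>a\<in>A. \<exists>b\<in>B. a + b \<notin> Fs"
  using assms
proof (induction "card A" arbitrary: A Fs rule: less_induct)
  case less
  show ?case
  proof (cases "card Fs < card B")
    case True
    obtain a where a: "a \<in> A" using less.prems by auto
    have "inj_on (\<lambda>b. a + b) B" by (simp add: inj_on_def)
    then obtain b where "b \<in> B" "a + b \<notin> Fs"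
      using pigeon_img[OF less.prems(2) less.prems(3) True] by blast
    then show ?thesis using a by blast
  next
    case False
    then have cA: "card A \<ge> 2" using less.prems by simp
    define a where "a = Max A"
    define b where "b = Max B"
    have aA: "a \<in> A" unfolding a_def using less.prems Max_in by blast
    have bB: "b \<in> B" unfolding b_def using less.prems Max_in by blast
    show ?thesis
    proof (cases "a + b \<in> Fs")
      case False
      then show ?thesis using aA bB by blast
    next
      case True
      let ?A = "A - {a}" and ?F = "Fs - {a + b}"
      have c1: "card ?A < card A" by (rule card_Diff1_less[OF less.prems(1) aA])
      have c2: "card ?A = card A - 1" using aA less.prems(1) by simp
      have c3: "card ?F = card Fs - 1" using True less.prems(3) by simp
      have "card ?A \<ge> 1" using cA c2 by simp
      then have ne: "?A \<noteq> {}" by (metis card.empty not_one_le_zero)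
      have "card Fs \<ge> 1" using True less.prems(3) by (metis One_nat_def Suc_leI card_gt_0_iff empty_iff)
      then have "card ?F + 2 \<le> card ?A + card B" using c2 c3 cA less.prems(6) by arith
      then obtain a' b' where ab: "a' \<in> ?A" "b' \<in> B" "a' + b' \<notin> ?F"
        using less.hyps[OF c1 _ less.prems(2) _ ne less.prems(5)] less.prems(1,3) by blast
      have "a' < a" using ab(1) less.prems(1) unfolding a_def
        by (metis DiffE Max_ge insertCI order_le_neq_trans)
      moreover have "b' \<le> b" using ab(2) less.prems(2) unfolding b_def by simp
      ultimately have "a' + b' \<noteq> a + b" by simp
      then show ?thesis using ab by blast
    qed
  qed
qed

lemma ne_of_card: "1 \<le> card X \<Longrightarrow> X \<noteq> {}" by auto

lemma max_less:
  fixes A :: "nat set"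
  assumes "finite A" "x \<in> A" "x \<noteq> Max A"
  shows "x < Max A"
  using assms by (metis Max_ge order_le_neq_trans)

lemma sum_res:
  fixes A B Fs :: "nat set" and p q :: nat
  assumes "finite A" "finite B" "finite Fs" "A \<noteq> {}" "B \<noteq> {}"
    "card Fs + 4 \<le> card A + card B"
  shows "\<exists>a\<in>A. \<exists>b\<in>B. a + p \<noteq> b + q \<and> a + b \<notin> Fs"
  using assms
proof (induction "card A + card B" arbitrary: A B Fs rule: less_induct)
  case less
  note fin = less.prems(1,2,3)
  show ?case
  proof (cases "card Fs + 2 \<le> card B")
    case True
    obtain a where a: "a \<in> A" using less.prems by auto
    let ?S = "{b \<in> B. a + p \<noteq> b + q}"
    have "B \<subseteq> insert (a + p - q) ?S"
    proof
      fix x assume "x \<in> B" then show "x \<in> insert (a + p - q) ?S" by (cases "a + p = x + q") auto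
    qed
    then have "card B \<le> card (insert (a + p - q) ?S)" using fin by (intro card_mono) auto
    also have "\<dots> \<le> Suc (card ?S)" using fin by (simp add: card_insert_if)
    finally have cs: "card Fs < card ?S" using True by simp
    have finS: "finite ?S" using fin(2) by simp
    have "inj_on (\<lambda>b. a + b) ?S" by (simp add: inj_on_def)
    then obtain b where "b \<in> ?S" "a + b \<notin> Fs"
      using pigeon_img[OF finS fin(3) cs] by blast
    then show ?thesis using a by blast
  next
    case F1: False
    show ?thesis
    proof (cases "card Fs + 2 \<le> card A")
      case True
      obtain b where b: "b \<in> B" using less.prems by auto
      let ?S = "{a \<in> A. a + p \<noteq> b + q}"
      have "A \<subseteq> insert (b + q - p) ?S"
      proof
        fix x assume "x \<in> A" then show "x \<in> insert (b + q - p) ?S" by (cases "x + p = b + q") auto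
      qed
      then have "card A \<le> card (insert (b + q - p) ?S)" using fin by (intro card_mono) auto
      also have "\<dots> \<le> Suc (card ?S)" using fin by (simp add: card_insert_if)
      finally have cs: "card Fs < card ?S" using True by simp
      have finS: "finite ?S" using fin(1) by simp
      have "inj_on (\<lambda>a. a + b) ?S" by (simp add: inj_on_def)
      then obtain a where "a \<in> ?S" "a + b \<notin> Fs"
        using pigeon_img[OF finS fin(3) cs] by blast
      then show ?thesis using b by blast
    next
      case F2: False
      have cA: "card A \<ge> 3" and cB: "card B \<ge> 3" using F1 F2 less.prems(6) by auto
      define a where "a = Max A"
      define b where "b = Max B"
      have aA: "a \<in> A" unfolding a_def using less.prems Max_in by blast
      have bB: "b \<in> B" unfolding b_def using less.prems Max_in by blast
      have ltA: "\<And>x. x \<in> A \<Longrightarrow> x \<noteq> a \<Longrightarrow> x < a" unfolding a_def using fin max_less by blast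
      have ltB: "\<And>x. x \<in> B \<Longrightarrow> x \<noteq> b \<Longrightarrow> x < b" unfolding b_def using fin max_less by blast
      have cA1: "card (A - {a}) = card A - 1" using aA fin by simp
      have cB1: "card (B - {b}) = card B - 1" using bB fin by simp
      have neA1: "A - {a} \<noteq> {}" using cA cA1 by (intro ne_of_card) simp
      have neB1: "B - {b} \<noteq> {}" using cB cB1 by (intro ne_of_card) simp
      show ?thesis
      proof (cases "a + p = b + q")
        case False
        show ?thesis
        proof (cases "a + b \<in> Fs")
          case False
          then show ?thesis using aA bB \<open>a + p \<noteq> b + q\<close> by blast
        next
          case True
          let ?F = "Fs - {a + b}"
          have c3: "card ?F = card Fs - 1" using True fin by simp
          have "card Fs \<ge> 1" using True fin(3) by (metis One_nat_def Suc_leI card_gt_0_iff empty_iff)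
          then have cc: "card ?F + 4 \<le> card (A - {a}) + card B" using c3 cA1 cA less.prems(6) by arith
          have lt: "card (A - {a}) + card B < card A + card B" using cA1 cA by arith
          obtain x y where xy: "x \<in> A - {a}" "y \<in> B" "x + p \<noteq> y + q" "x + y \<notin> ?F"
            using less.hyps[OF lt _ fin(2) _ neA1 less.prems(5) cc] fin by (meson finite_Diff)
          have "x < a" using xy ltA by blast
          moreover have "y \<le> b" using xy ltB by fastforce
          ultimately have "x + y \<noteq> a + b" by simp
          then show ?thesis using xy by blast
        qed
      next
        case eq: True
        define a' where "a' = Max (A - {a})"
        define b' where "b' = Max (B - {b})"
        have a'A: "a' \<in> A - {a}" unfolding a'_def using neA1 fin Max_in[of "A - {a}"] by simp
        have b'B: "b' \<in> B - {b}" unfolding b'_def using neB1 fin Max_in[of "B - {b}"] by simp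
        have ltA': "\<And>x. x \<in> A - {a} \<Longrightarrow> x \<noteq> a' \<Longrightarrow> x < a'" unfolding a'_def using fin max_less[of "A - {a}"] by simp
        have ltB': "\<And>x. x \<in> B - {b} \<Longrightarrow> x \<noteq> b' \<Longrightarrow> x < b'" unfolding b'_def using fin max_less[of "B - {b}"] by simp
        have a'a: "a' < a" using a'A ltA by blast
        have b'b: "b' < b" using b'B ltB by blast
        have al1: "a + p \<noteq> b' + q" using eq b'b by simp
        have al2: "a' + p \<noteq> b + q" using eq a'a by simp
        have lt: "card (A - {a}) + card (B - {b}) < card A + card B" using cA1 cB1 cA by arith
        have subsum: "\<And>x y. x \<in> A - {a} \<Longrightarrow> y \<in> B - {b} \<Longrightarrow> x + y \<le> a' + b'"
        proof -
          fix x y assume "x \<in> A - {a}" "y \<in> B - {b}"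
          then have "x \<le> a'" "y \<le> b'" using ltA' ltB' by fastforce+
          then show "x + y \<le> a' + b'" by simp
        qed
        show ?thesis
        proof (cases "a + b' \<in> Fs \<and> a' + b \<in> Fs")
          case False
          then show ?thesis using al1 al2 aA bB a'A b'B by blast
        next
          case inF: True
          show ?thesis
          proof (cases "a + b' = a' + b")
            case False
            let ?F = "Fs - {a + b', a' + b}"
            have c3: "card ?F = card Fs - 2" using inF False fin by (simp add: card_Diff_subset)
            have "card {a + b', a' + b} \<le> card Fs" using inF fin(3) by (intro card_mono) auto
            then have "card Fs \<ge> 2" using False by simp
            then have cc: "card ?F + 4 \<le> card (A - {a}) + card (B - {b})" using c3 cA1 cB1 cA cB less.prems(6) by arith
            obtain x y where xy: "x \<in> A - {a}" "y \<in> B - {b}" "x + p \<noteq> y + q" "x + y \<notin> ?F"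
              using less.hyps[OF lt _ _ _ neA1 neB1 cc] fin by (meson finite_Diff)
            have "x + y \<le> a' + b'" using subsum xy by blast
            then have "x + y \<noteq> a + b'" "x + y \<noteq> a' + b" using a'a b'b by simp_all
            then show ?thesis using xy by blast
          next
            case T: True
            have eq2: "a' + p = b' + q" using eq T by arith
            have cA2: "card (A - {a} - {a'}) = card A - 2" using cA1 a'A fin cA by simp
            have cB2: "card (B - {b} - {b'}) = card B - 2" using cB1 b'B fin cB by simp
            have neA2: "A - {a} - {a'} \<noteq> {}" using cA2 cA by (intro ne_of_card) simp
            have neB2: "B - {b} - {b'} \<noteq> {}" using cB2 cB by (intro ne_of_card) simp
            define a'' where "a'' = Max (A - {a} - {a'})"
            define b'' where "b'' = Max (B - {b} - {b'})"
            have a''A: "a'' \<in> A - {a} - {a'}" unfolding a''_def using neA2 fin Max_in[of "A - {a} - {a'}"] by simp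
            have b''B: "b'' \<in> B - {b} - {b'}" unfolding b''_def using neB2 fin Max_in[of "B - {b} - {b'}"] by simp
            have ltA'': "\<And>x. x \<in> A - {a} - {a'} \<Longrightarrow> x \<le> a''" unfolding a''_def using fin by simp
            have ltB'': "\<And>x. x \<in> B - {b} - {b'} \<Longrightarrow> x \<le> b''" unfolding b''_def using fin by simp
            have a''a': "a'' < a'" using a''A ltA' by blast
            have b''b': "b'' < b'" using b''B ltB' by blast
            define M where "M = max (a + b'') (a'' + b)"
            have al3: "a + p \<noteq> b'' + q" using eq b''b' b'b by simp
            have al4: "a'' + p \<noteq> b + q" using eq a''a' a'a by simp
            have MT: "M < a + b'" unfolding M_def using b''b' a''a' T by simp
            show ?thesis
            proof (cases "M \<in> Fs")
              case False
              then show ?thesis unfolding M_def using al3 al4 aA bB a''A b''B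
                by (cases "a + b'' \<le> a'' + b") (auto simp: max_def)
            next
              case MF: True
              let ?F = "Fs - {a + b', M}"
              have c3: "card ?F = card Fs - 2" using inF MF MT fin by (simp add: card_Diff_subset)
              have "card {a + b', M} \<le> card Fs" using inF MF fin(3) by (intro card_mono) auto
              then have "card Fs \<ge> 2" using MT by simp
              then have cc: "card ?F + 4 \<le> card (A - {a}) + card (B - {b})" using c3 cA1 cB1 cA cB less.prems(6) by arith
              obtain x y where xy: "x \<in> A - {a}" "y \<in> B - {b}" "x + p \<noteq> y + q" "x + y \<notin> ?F"
                using less.hyps[OF lt _ _ _ neA1 neB1 cc] fin by (meson finite_Diff)
              have "x + y < M"
              proof (cases "x = a'")
                case True
                then have "y \<noteq> b'" using xy eq2 by blast
                then have "y \<le> b''" using ltB'' xy by blast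
                then show ?thesis unfolding M_def using True a'a by simp
              next
                case False
                then have "x \<le> a''" using ltA'' xy by blast
                moreover have "y \<le> b'" using xy ltB' by fastforce
                ultimately show ?thesis unfolding M_def using b'b by simp
              qed
              then have "x + y \<noteq> a + b'" "x + y \<noteq> M" using MT by simp_all
              then show ?thesis using xy by blast
            qed
          qed
        qed
      qed
    qed
  qed
qed

definition cap :: "'a set \<Rightarrow> ('a \<Rightarrow> 'a \<Rightarrow> bool) \<Rightarrow> 'a \<Rightarrow> nat" where
  "cap V E v = (deg V E v + 1) div 2"

definition cnt :: "'a set \<Rightarrow> ('a \<Rightarrow> 'a \<Rightarrow> bool) \<Rightarrow> ('a set \<Rightarrow> nat) \<Rightarrow> 'a \<Rightarrow> nat \<Rightarrow> nat" where
  "cnt V E c v i = card {u \<in> nbrs V E v. c {v, u} = i}"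

definition pqm :: "'a set \<Rightarrow> ('a \<Rightarrow> 'a \<Rightarrow> bool) \<Rightarrow> ('a set \<Rightarrow> nat) \<Rightarrow> bool" where
  "pqm V E c \<longleftrightarrow> (\<forall>v\<in>V. \<forall>i. i \<noteq> 0 \<longrightarrow> cnt V E c v i \<le> cap V E v)"

lemma cap_eq: "nat \<lceil>real d / 2\<rceil> = (d + 1) div 2"
  by linarith

lemma two_cap: "deg V E v \<le> 2 * cap V E v"
  unfolding cap_def by simp

lemma sg_fin: "simple_graph V E \<Longrightarrow> finite V"
  unfolding simple_graph_def by simp

lemma sg_V: "simple_graph V E \<Longrightarrow> E u v \<Longrightarrow> u \<in> V \<and> v \<in> V"
  unfolding simple_graph_def by blast

lemma sg_sym: "simple_graph V E \<Longrightarrow> E u v \<Longrightarrow> E v u"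
  unfolding simple_graph_def by blast

lemma sg_irr: "simple_graph V E \<Longrightarrow> \<not> E v v"
  unfolding simple_graph_def by blast

lemma fin_nbrs: "simple_graph V E \<Longrightarrow> finite (nbrs V E v)"
  unfolding nbrs_def simple_graph_def by simp

lemma nbrs_iff: "simple_graph V E \<Longrightarrow> u \<in> nbrs V E v \<longleftrightarrow> E v u"
  unfolding nbrs_def using sg_V by fastforce

lemma deg_le_max:
  assumes "simple_graph V E" "v \<in> V"
  shows "deg V E v \<le> max_deg V E"
proof -
  have "finite (insert 0 (deg V E ` V))" using sg_fin[OF assms(1)] by simp
  then show ?thesis unfolding max_deg_def using assms(2) by (simp add: Max_ge)
qed

lemma sigma_cong:
  assumes "\<And>z. z \<in> nbrs V E t \<Longrightarrow> c' {t, z} = c {t, z}"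
  shows "sigma V E c' t = sigma V E c t"
  unfolding sigma_def using assms by (intro sum.cong) auto

lemma cnt_cong:
  assumes "\<And>z. z \<in> nbrs V E t \<Longrightarrow> c' {t, z} = c {t, z}"
  shows "cnt V E c' t i = cnt V E c t i"
  unfolding cnt_def using assms by (metis (no_types, lifting))

lemma sigma_upd:
  assumes sg: "simple_graph V E" and e: "E u v" and z: "c {u, v} = 0"
  shows "sigma V E (c({u, v} := x)) t = sigma V E c t + (if t = u \<or> t = v then x else 0)"
proof -
  have uv: "u \<noteq> v" using sg_irr[OF sg] e by blast
  have fin: "finite (nbrs V E t)" using fin_nbrs[OF sg] .
  show ?thesis
  proof (cases "t = u \<or> t = v")
    case False
    have "\<And>z. {t, z} \<noteq> {u, v}" using False by (auto simp: doubleton_eq_iff)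
    then have "sigma V E (c({u, v} := x)) t = sigma V E c t" by (intro sigma_cong) simp
    then show ?thesis using False by simp
  next
    case True
    define w where "w = (if t = u then v else u)"
    have tw: "{t, w} = {u, v}" unfolding w_def using True by auto
    have wn: "w \<in> nbrs V E t" unfolding w_def using True e sg_sym[OF sg e] nbrs_iff[OF sg] uv by auto
    have oth: "\<And>z. z \<noteq> w \<Longrightarrow> {t, z} \<noteq> {u, v}" unfolding w_def using True uv by (auto simp: doubleton_eq_iff)
    let ?f' = "\<lambda>z. (c({u, v} := x)) {t, z}" and ?f = "\<lambda>z. c {t, z}"
    have s1: "sigma V E (c({u, v} := x)) t = sum ?f' (nbrs V E t)" unfolding sigma_def by (rule refl)
    have s2: "sum ?f' (nbrs V E t) = ?f' w + sum ?f' (nbrs V E t - {w})" by (rule sum.remove[OF fin wn])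
    have s3: "sum ?f' (nbrs V E t - {w}) = sum ?f (nbrs V E t - {w})"
      using oth by (intro sum.cong) auto
    have s4: "?f' w = x" using tw by simp
    have s5: "sigma V E c t = sum ?f (nbrs V E t)" unfolding sigma_def by (rule refl)
    have s6: "sum ?f (nbrs V E t) = ?f w + sum ?f (nbrs V E t - {w})" by (rule sum.remove[OF fin wn])
    have s7: "?f w = 0" using tw z by simp
    have "sigma V E (c({u, v} := x)) t = x + sum ?f (nbrs V E t - {w})" using s1 s2 s3 s4 by simp
    moreover have "sigma V E c t = sum ?f (nbrs V E t - {w})" using s5 s6 s7 by simp
    ultimately show ?thesis using True by simp
  qed
qed

lemma cnt_upd:
  assumes sg: "simple_graph V E" and e: "E u v" and z: "c {u, v} = 0" and i: "i \<noteq> 0"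
  shows "cnt V E (c({u, v} := x)) t i = cnt V E c t i + (if (t = u \<or> t = v) \<and> i = x then 1 else 0)"
proof -
  have uv: "u \<noteq> v" using sg_irr[OF sg] e by blast
  have fin: "finite (nbrs V E t)" using fin_nbrs[OF sg] .
  show ?thesis
  proof (cases "t = u \<or> t = v")
    case False
    have "\<And>z. {t, z} \<noteq> {u, v}" using False by (auto simp: doubleton_eq_iff)
    then have "cnt V E (c({u, v} := x)) t i = cnt V E c t i" by (intro cnt_cong) simp
    then show ?thesis using False by simp
  next
    case True
    define w where "w = (if t = u then v else u)"
    have tw: "{t, w} = {u, v}" unfolding w_def using True by auto
    have wn: "w \<in> nbrs V E t" unfolding w_def using True e sg_sym[OF sg e] nbrs_iff[OF sg] uv by auto
    have oth: "\<And>z. z \<noteq> w \<Longrightarrow> {t, z} \<noteq> {u, v}" unfolding w_def using True uv by (auto simp: doubleton_eq_iff)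
    let ?R = "{z \<in> nbrs V E t - {w}. c {t, z} = i}"
    have old: "{z \<in> nbrs V E t. c {t, z} = i} = ?R"
      using tw z i by auto
    have new: "{z \<in> nbrs V E t. (c({u, v} := x)) {t, z} = i} = (if i = x then insert w ?R else ?R)"
      using tw oth wn by auto
    have finR: "finite ?R" using fin by simp
    have wR: "w \<notin> ?R" by simp
    have cc: "cnt V E (c({u, v} := x)) t i = card (if i = x then insert w ?R else ?R)"
      unfolding cnt_def new by (rule refl)
    have ci: "card (insert w ?R) = Suc (card ?R)" by (rule card_insert_disjoint[OF finR wR])
    have "cnt V E (c({u, v} := x)) t i = (if i = x then Suc (card ?R) else card ?R)"
    proof (cases "i = x")
      case True
      have "cnt V E (c({u, v} := x)) t i = card (insert w ?R)" using cc by (simp only: if_P[OF True])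
      then show ?thesis using ci by (simp only: if_P[OF True])
    next
      case False
      show ?thesis using cc by (simp only: if_not_P[OF False])
    qed
    moreover have "cnt V E c t i = card ?R" unfolding cnt_def old by (rule refl)
    ultimately show ?thesis using True by simp
  qed
qed

lemma fiber2:
  assumes sg: "simple_graph V E" and ij: "i \<noteq> j" "i \<noteq> 0" "j \<noteq> 0"
    and U: "U \<subseteq> nbrs V E v" "\<And>u. u \<in> U \<Longrightarrow> c {v, u} = 0"
  shows "cnt V E c v i + cnt V E c v j + card U \<le> deg V E v"
proof -
  let ?I = "{u \<in> nbrs V E v. c {v, u} = i}" and ?J = "{u \<in> nbrs V E v. c {v, u} = j}"
  have fin: "finite (nbrs V E v)" using fin_nbrs[OF sg] .
  have d1: "?I \<inter> ?J = {}" using ij by auto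
  have d2: "(?I \<union> ?J) \<inter> U = {}" using ij U by auto
  have sub: "?I \<union> ?J \<union> U \<subseteq> nbrs V E v" using U by auto
  have fU: "finite U" using U(1) fin finite_subset by blast
  have "card (?I \<union> ?J \<union> U) = card ?I + card ?J + card U"
    using fin fU d1 d2 by (simp add: card_Un_disjoint)
  moreover have "card (?I \<union> ?J \<union> U) \<le> deg V E v" unfolding deg_def using sub fin by (simp add: card_mono)
  ultimately show ?thesis unfolding cnt_def by simp
qed

lemma fiber3:
  assumes sg: "simple_graph V E" and ij: "i \<noteq> j" "i \<noteq> l" "j \<noteq> l" "i \<noteq> 0" "j \<noteq> 0" "l \<noteq> 0"
    and U: "U \<subseteq> nbrs V E v" "\<And>u. u \<in> U \<Longrightarrow> c {v, u} = 0"
  shows "cnt V E c v i + cnt V E c v j + cnt V E c v l + card U \<le> deg V E v"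
proof -
  let ?I = "{u \<in> nbrs V E v. c {v, u} = i}" and ?J = "{u \<in> nbrs V E v. c {v, u} = j}"
    and ?L = "{u \<in> nbrs V E v. c {v, u} = l}"
  have fin: "finite (nbrs V E v)" using fin_nbrs[OF sg] .
  have d1: "?I \<inter> ?J = {}" using ij by auto
  have d2: "(?I \<union> ?J) \<inter> ?L = {}" using ij by auto
  have d3: "(?I \<union> ?J \<union> ?L) \<inter> U = {}" using ij U by auto
  have sub: "?I \<union> ?J \<union> ?L \<union> U \<subseteq> nbrs V E v" using U by auto
  have fU: "finite U" using U(1) fin finite_subset by blast
  have "card (?I \<union> ?J \<union> ?L \<union> U) = card ?I + card ?J + card ?L + card U"
    using fin fU d1 d2 d3 by (simp add: card_Un_disjoint)
  moreover have "card (?I \<union> ?J \<union> ?L \<union> U) \<le> deg V E v" unfolding deg_def using sub fin by (simp add: card_mono)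
  ultimately show ?thesis unfolding cnt_def by simp
qed

lemma one_sat:
  assumes sg: "simple_graph V E" and u: "u \<in> nbrs V E v" "c {v, u} = 0"
  shows "\<exists>s. \<forall>i. i \<noteq> 0 \<longrightarrow> cap V E v \<le> cnt V E c v i \<longrightarrow> i = s"
proof (rule ccontr)
  assume "\<not> ?thesis"
  then obtain i j where ij: "i \<noteq> 0" "cap V E v \<le> cnt V E c v i" "j \<noteq> 0" "cap V E v \<le> cnt V E c v j" "i \<noteq> j"
    by metis
  have "cnt V E c v i + cnt V E c v j + card {u} \<le> deg V E v"
    using fiber2[OF sg ij(5) ij(1) ij(3), of "{u}" v c] u by auto
  then show False using ij two_cap[of V E v] by simp
qed

lemma card_preimage_add:
  fixes F :: "nat set"
  assumes "finite F"
  shows "card {x. s + x \<in> F} \<le> card F"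
proof -
  have "(\<lambda>x. s + x) ` {x. s + x \<in> F} \<subseteq> F" by auto
  moreover have "inj_on (\<lambda>x. s + x) {x. s + x \<in> F}" by (simp add: inj_on_def)
  ultimately show ?thesis using assms by (metis card_image card_mono)
qed

lemma fin_preimage_add:
  fixes F :: "nat set"
  assumes "finite F"
  shows "finite {x. s + x \<in> F}"
proof -
  have "{x. s + x \<in> F} \<subseteq> (\<lambda>y. y - s) ` F" by (auto intro!: image_eqI)
  then show ?thesis using assms finite_subset by blast
qed

lemma one_edge:
  assumes sg: "simple_graph V E" and e: "E u v" and z: "c {u, v} = 0" and q: "pqm V E c"
    and X: "finite X" "card X + 3 \<le> K"
  shows "\<exists>x. x \<in> {1..K} \<and> x \<notin> X \<and> pqm V E (c({u, v} := x))"
proof -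
  have vu: "v \<in> nbrs V E u" using e nbrs_iff[OF sg] by simp
  have uv': "u \<in> nbrs V E v" using sg_sym[OF sg e] nbrs_iff[OF sg] by simp
  have zz: "c {v, u} = 0" using z by (simp add: insert_commute)
  obtain s1 where s1: "\<And>i. i \<noteq> 0 \<Longrightarrow> cap V E u \<le> cnt V E c u i \<Longrightarrow> i = s1"
    using one_sat[of V E v u c, OF sg vu z] by blast
  obtain s2 where s2: "\<And>i. i \<noteq> 0 \<Longrightarrow> cap V E v \<le> cnt V E c v i \<Longrightarrow> i = s2"
    using one_sat[of V E u v c, OF sg uv' zz] by blast
  have "{1..K} \<subseteq> ({1..K} - (X \<union> {s1, s2})) \<union> (X \<union> {s1, s2})" by auto
  then have "K \<le> card ({1..K} - (X \<union> {s1, s2})) + card (X \<union> {s1, s2})"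
    by (metis card_Un_le card_atLeastAtMost diff_Suc_1 card_mono finite_Un finite_atLeastAtMost finite_Diff order_trans X(1) finite.insertI finite.emptyI)
  moreover have "card (X \<union> {s1, s2}) \<le> card X + 2"
    using card_Un_le[of X "{s1, s2}"] card_insert_le_m1[of 2 "{s2}" s1] by simp
  ultimately have "card ({1..K} - (X \<union> {s1, s2})) \<noteq> 0" using X(2) by linarith
  then obtain x where x: "x \<in> {1..K}" "x \<notin> X" "x \<noteq> s1" "x \<noteq> s2"
    by (metis DiffE UnCI card.empty ex_in_conv insertCI)
  have "pqm V E (c({u, v} := x))"
    unfolding pqm_def
  proof (intro ballI allI impI)
    fix t and i :: nat assume t: "t \<in> V" and i: "i \<noteq> 0"
    have eq: "cnt V E (c({u, v} := x)) t i = cnt V E c t i + (if (t = u \<or> t = v) \<and> i = x then 1 else 0)"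
      using cnt_upd[of V E u v c i x t, OF sg e z i] .
    have old: "cnt V E c t i \<le> cap V E t" using q t i unfolding pqm_def by blast
    show "cnt V E (c({u, v} := x)) t i \<le> cap V E t"
    proof (cases "(t = u \<or> t = v) \<and> i = x")
      case True
      then have "cnt V E c t i < cap V E t" using s1 s2 x i by (metis not_le)
      then show ?thesis using eq if_P[OF True, of "1::nat" 0] by linarith
    next
      case False
      then show ?thesis using eq old if_not_P[OF False, of "1::nat" 0] by linarith
    qed
  qed
  then show ?thesis using x by blast
qed

definition wn :: "('a \<Rightarrow> 'a \<Rightarrow> bool) \<Rightarrow> 'a set \<Rightarrow> 'a \<Rightarrow> 'a set" where
  "wn E W v = {u \<in> W. E v u}"

definition good :: "('a \<Rightarrow> 'a \<Rightarrow> bool) \<Rightarrow> 'a set \<Rightarrow> bool" where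
  "good E W \<longleftrightarrow> (\<forall>w\<in>W. \<exists>u\<in>W. E w u) \<and>
     (\<forall>x y. x \<in> W \<longrightarrow> y \<in> W \<longrightarrow> E x y \<longrightarrow> \<not> (card (wn E W x) = 1 \<and> card (wn E W y) = 1))"

lemma wn_rm: "wn E (W - {w}) v = wn E W v - {w}"
  unfolding wn_def by auto

lemma fin_wn: "finite W \<Longrightarrow> finite (wn E W v)"
  unfolding wn_def by simp

lemma card_wn_rm:
  assumes "finite W"
  shows "card (wn E (W - {w}) v) = (if w \<in> wn E W v then card (wn E W v) - 1 else card (wn E W v))"
  unfolding wn_rm using fin_wn[OF assms] by simp

lemma rm_ok:
  assumes sym: "\<And>u v. E u v \<Longrightarrow> E v u" and fin: "finite W" and g: "good E W" and w: "w \<in> W"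
    and c1: "\<And>v. v \<in> W - {w} \<Longrightarrow> E v w \<Longrightarrow> card (wn E W v - {w}) \<ge> 1"
    and c2: "\<And>v y. v \<in> W - {w} \<Longrightarrow> E v w \<Longrightarrow> card (wn E W v - {w}) = 1 \<Longrightarrow>
              y \<in> W - {w} \<Longrightarrow> E v y \<Longrightarrow> card (wn E W y - {w}) \<ge> 2"
  shows "good E (W - {w})"
  unfolding good_def
proof (intro conjI allI impI ballI)
  fix v assume v: "v \<in> W - {w}"
  show "\<exists>u\<in>W - {w}. E v u"
  proof (cases "E v w")
    case True
    then have "card (wn E W v - {w}) \<ge> 1" using c1 v by blast
    then obtain u where "u \<in> wn E W v - {w}" by (metis card.empty ex_in_conv not_one_le_zero)
    then show ?thesis unfolding wn_def by auto
  next
    case False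
    obtain u where "u \<in> W" "E v u" using g v unfolding good_def by blast
    then show ?thesis using False by (metis DiffI singletonD)
  qed
next
  fix x y assume x: "x \<in> W - {w}" and y: "y \<in> W - {w}" and xy: "E x y"
  show "\<not> (card (wn E (W - {w}) x) = 1 \<and> card (wn E (W - {w}) y) = 1)"
  proof
    assume h: "card (wn E (W - {w}) x) = 1 \<and> card (wn E (W - {w}) y) = 1"
    then have hx: "card (wn E W x - {w}) = 1" and hy: "card (wn E W y - {w}) = 1" unfolding wn_rm by auto
    show False
    proof (cases "E x w")
      case True
      then show False using c2[OF x True hx y xy] hy by simp
    next
      case Fx: False
      show False
      proof (cases "E y w")
        case True
        then show False using c2[OF y True hy x sym[OF xy]] hx by simp
      next
        case False
        have "wn E W x - {w} = wn E W x" using Fx unfolding wn_def by auto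
        moreover have "wn E W y - {w} = wn E W y" using False unfolding wn_def by auto
        ultimately show False using g x y xy hx hy unfolding good_def by auto
      qed
    qed
  qed
qed

definition closed3 :: "('a \<Rightarrow> 'a \<Rightarrow> bool) \<Rightarrow> 'a set \<Rightarrow> 'a \<Rightarrow> 'a \<Rightarrow> 'a \<Rightarrow> bool" where
  "closed3 E W a r b \<longleftrightarrow> a \<in> W \<and> r \<in> W \<and> b \<in> W \<and> a \<noteq> b \<and> E r a \<and> E r b \<and>
     wn E W r = {a, b} \<and> wn E W a \<subseteq> {r, b} \<and> wn E W b \<subseteq> {r, a}"

lemma wn_card1:
  assumes "finite W" "card (wn E W v) = 1" "x \<in> wn E W v"
  shows "wn E W v = {x}"
  using assms by (metis card_1_singletonE singletonD)

lemma wn_card2: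
  assumes "finite W" "card (wn E W v) = 2" "x \<in> wn E W v"
  shows "\<exists>y. y \<noteq> x \<and> wn E W v = {x, y}"
proof -
  obtain p q where pq: "p \<noteq> q" "wn E W v = {p, q}" using assms(2) by (meson card_2_iff)
  then show ?thesis using assms(3) by (metis insertE insert_commute singletonD)
qed

lemma good_step:
  assumes sym: "\<And>u v. E u v \<Longrightarrow> E v u" and irr: "\<And>v. \<not> E v v"
    and fin: "finite W" and g: "good E W" and ne: "W \<noteq> {}"
  shows "(\<exists>w\<in>W. (\<exists>u\<in>W. E w u) \<and> good E (W - {w})) \<or> (\<exists>a r b. closed3 E W a r b)"
proof -
  have hasn: "\<And>v. v \<in> W \<Longrightarrow> \<exists>u. u \<in> wn E W v" using g unfolding good_def wn_def by blast
  have d1: "\<And>v. v \<in> W \<Longrightarrow> card (wn E W v) \<ge> 1"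
    using hasn fin_wn[OF fin] by (metis One_nat_def Suc_leI card_gt_0_iff empty_iff)
  have inwn: "\<And>u v. u \<in> W \<Longrightarrow> E v u \<Longrightarrow> u \<in> wn E W v" unfolding wn_def by simp
  have wnW: "\<And>u v. u \<in> wn E W v \<Longrightarrow> u \<in> W \<and> E v u" unfolding wn_def by simp
  have gd: "\<And>x y. x \<in> W \<Longrightarrow> y \<in> W \<Longrightarrow> E x y \<Longrightarrow> card (wn E W x) = 1 \<Longrightarrow> card (wn E W y) \<noteq> 1"
    using g unfolding good_def by blast
  have crm: "\<And>v w. w \<in> wn E W v \<Longrightarrow> card (wn E W v - {w}) = card (wn E W v) - 1"
    using fin_wn[OF fin] by simp
  have crm0: "\<And>v w. w \<notin> wn E W v \<Longrightarrow> card (wn E W v - {w}) = card (wn E W v)"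
    by simp
  show ?thesis
  proof (cases "\<exists>w\<in>W. card (wn E W w) = 1")
    case True
    then obtain w where w: "w \<in> W" "card (wn E W w) = 1" by blast
    obtain x where x: "x \<in> wn E W w" using hasn w by blast
    have wx: "wn E W w = {x}" using wn_card1[OF fin w(2) x] .
    have xW: "x \<in> W" and Ewx: "E w x" using wnW x by auto
    have wxn: "w \<in> wn E W x" using inwn[OF w(1) sym[OF Ewx]] .
    have dx: "card (wn E W x) \<noteq> 1" using gd[OF w(1) xW Ewx w(2)] .
    have adjw: "\<And>v. E v w \<Longrightarrow> v \<in> W \<Longrightarrow> v = x" using wx inwn sym by blast
    have xw: "x \<noteq> w" using Ewx irr by blast
    show ?thesis
    proof (cases "card (wn E W x) \<ge> 3")
      case True
      have "good E (W - {w})"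
      proof (rule rm_ok[OF sym fin g w(1)])
        fix v assume "v \<in> W - {w}" "E v w"
        then have "v = x" using adjw by blast
        then show "card (wn E W v - {w}) \<ge> 1" using crm[OF wxn] True by simp
      next
        fix v y assume "v \<in> W - {w}" "E v w" "card (wn E W v - {w}) = 1"
        then have "v = x" using adjw by blast
        then have False using crm[OF wxn] True \<open>card (wn E W v - {w}) = 1\<close> by simp
        then show "card (wn E W y - {w}) \<ge> 2" by simp
      qed
      then show ?thesis using w Ewx xW by blast
    next
      case False
      then have d2: "card (wn E W x) = 2" using dx d1[OF xW] by simp
      obtain y where y: "y \<noteq> w" "wn E W x = {w, y}" using wn_card2[OF fin d2 wxn] by blast
      have yW: "y \<in> W" and Exy: "E x y" using wnW y(2) by auto
      have yx: "y \<noteq> x" using Exy irr by blast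
      have xyn: "x \<in> wn E W y" using inwn[OF xW sym[OF Exy]] .
      have nEyw: "\<not> E y w" using adjw yW yx by blast
      show ?thesis
      proof (cases "card (wn E W y) \<ge> 2")
        case True
        have "good E (W - {w})"
        proof (rule rm_ok[OF sym fin g w(1)])
          fix v assume "v \<in> W - {w}" "E v w"
          then have "v = x" using adjw by blast
          then show "card (wn E W v - {w}) \<ge> 1" using crm[OF wxn] d2 by simp
        next
          fix v z assume v: "v \<in> W - {w}" "E v w" "card (wn E W v - {w}) = 1" and z: "z \<in> W - {w}" "E v z"
          then have "v = x" using adjw by blast
          then have "z \<in> wn E W x" using z inwn by blast
          then have "z = y" using y z by auto
          have "w \<notin> wn E W y" using nEyw wnW by blast
          then show "card (wn E W z - {w}) \<ge> 2" using \<open>z = y\<close> True crm0 by simp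
        qed
        then show ?thesis using w Ewx xW by blast
      next
        case False
        then have dy: "card (wn E W y) = 1" using d1[OF yW] by simp
        have wy: "wn E W y = {x}" using wn_card1[OF fin dy xyn] .
        have "closed3 E W w x y" unfolding closed3_def
          using w(1) xW yW y(1) sym[OF Ewx] Exy y(2) wx wy by auto
        then show ?thesis by blast
      qed
    qed
  next
    case False
    then have d2: "\<And>v. v \<in> W \<Longrightarrow> card (wn E W v) \<ge> 2" using d1 by (metis One_nat_def Suc_1 Suc_leI le_neq_implies_less)
    obtain w where w: "w \<in> W" using ne by blast
    obtain u0 where u0: "u0 \<in> W" "E w u0" using g w unfolding good_def by blast
    show ?thesis
    proof (cases "good E (W - {w})")
      case True
      then show ?thesis using w u0 by blast
    next
      case notg: False
      have "\<exists>v y. v \<in> W - {w} \<and> E v w \<and> card (wn E W v - {w}) = 1 \<and> y \<in> W - {w} \<and> E v y \<and> card (wn E W y - {w}) < 2"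
      proof (rule ccontr)
        assume nn: "\<not> ?thesis"
        have "good E (W - {w})"
        proof (rule rm_ok[OF sym fin g w])
          fix v assume v: "v \<in> W - {w}" "E v w"
          then have "w \<in> wn E W v" using inwn w by blast
          then show "card (wn E W v - {w}) \<ge> 1" using crm d2 v by fastforce
        next
          fix v y assume "v \<in> W - {w}" "E v w" "card (wn E W v - {w}) = 1" "y \<in> W - {w}" "E v y"
          then show "card (wn E W y - {w}) \<ge> 2" using nn by (meson not_le)
        qed
        then show False using notg by blast
      qed
      then obtain v y where v: "v \<in> W - {w}" "E v w" "card (wn E W v - {w}) = 1"
        and y: "y \<in> W - {w}" "E v y" "card (wn E W y - {w}) < 2" by blast
      have wvn: "w \<in> wn E W v" using inwn w v by blast
      have dv: "card (wn E W v) = 2" using crm[OF wvn] v(3) d2 v(1) by fastforce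
      have yvn: "y \<in> wn E W v" using inwn y by blast
      have yw: "y \<noteq> w" using y by blast
      have wv: "wn E W v = {w, y}" using wn_card2[OF fin dv wvn] yvn yw by auto
      have Eyw: "E y w"
      proof (rule ccontr)
        assume "\<not> E y w"
        then have "w \<notin> wn E W y" using wnW by blast
        then show False using crm0 y d2 by fastforce
      qed
      have wyn: "w \<in> wn E W y" using inwn w Eyw by blast
      have dy: "card (wn E W y) = 2" using crm[OF wyn] y(3) d2 y(1) by fastforce
      have vyn: "v \<in> wn E W y" using inwn v sym[OF y(2)] by blast
      have vw: "v \<noteq> w" using v by blast
      have vy: "v \<noteq> y" using y(2) irr by blast
      have wy: "wn E W y = {w, v}" using wn_card2[OF fin dy wyn] vyn vw by auto
      show ?thesis
      proof (cases "card (wn E W w) = 2")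
        case True
        have "v \<in> wn E W w" "y \<in> wn E W w" using inwn v y sym[OF v(2)] sym[OF Eyw] by auto
        then have ww: "wn E W w = {v, y}" using wn_card2[OF fin True] vy by (metis doubleton_eq_iff insertE singletonD)
        have "closed3 E W v w y" unfolding closed3_def
          using w v(1) y(1) vy sym[OF v(2)] sym[OF Eyw] ww wv wy by auto
        then show ?thesis by blast
      next
        case False
        then have dw3: "card (wn E W w) \<ge> 3" using d2[OF w] by simp
        have vwn: "v \<in> wn E W w" using inwn v sym[OF v(2)] by blast
        have "good E (W - {v})"
        proof (rule rm_ok[OF sym fin g])
          show "v \<in> W" using v by blast
        next
          fix t assume t: "t \<in> W - {v}" "E t v"
          then have "t \<in> wn E W v" using inwn sym by blast
          then have "t = w \<or> t = y" using wv by blast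
          then show "card (wn E W t - {v}) \<ge> 1"
          proof
            assume "t = w" then show ?thesis using crm[OF vwn] dw3 by simp
          next
            assume "t = y" then show ?thesis using crm[OF vyn] dy by simp
          qed
        next
          fix t z assume t: "t \<in> W - {v}" "E t v" "card (wn E W t - {v}) = 1" and z: "z \<in> W - {v}" "E t z"
          then have "t \<in> wn E W v" using inwn sym by blast
          then have "t = w \<or> t = y" using wv by blast
          moreover have "t \<noteq> w" using t(3) crm[OF vwn] dw3 by auto
          ultimately have "t = y" by blast
          then have "z \<in> wn E W y" using z inwn by blast
          then have "z = w" using wy z by blast
          then show "card (wn E W z - {v}) \<ge> 2" using crm[OF vwn] dw3 by simp
        qed
        then show ?thesis using v sym[OF y(2)] y by blast
      qed
    qed
  qed
qed

lemma closed3_good: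
  assumes sym: "\<And>u v. E u v \<Longrightarrow> E v u" and fin: "finite W" and g: "good E W"
    and c: "closed3 E W a r b"
  shows "good E (W - {a, r, b})"
proof -
  have cl: "\<And>v t. v \<in> W - {a, r, b} \<Longrightarrow> t \<in> {a, r, b} \<Longrightarrow> \<not> E v t"
  proof -
    fix v t assume v: "v \<in> W - {a, r, b}" and t: "t \<in> {a, r, b}"
    show "\<not> E v t"
    proof
      assume "E v t"
      then have "v \<in> wn E W t" using v sym unfolding wn_def by auto
      then show False using c t v unfolding closed3_def by auto
    qed
  qed
  have eqn: "\<And>v. v \<in> W - {a, r, b} \<Longrightarrow> wn E (W - {a, r, b}) v = wn E W v"
    using cl unfolding wn_def by auto
  show ?thesis unfolding good_def
  proof (intro conjI allI impI ballI)
    fix v assume v: "v \<in> W - {a, r, b}"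
    obtain u where "u \<in> W" "E v u" using g v unfolding good_def by blast
    then show "\<exists>u\<in>W - {a, r, b}. E v u" using cl v by blast
  next
    fix x y assume "x \<in> W - {a, r, b}" "y \<in> W - {a, r, b}" "E x y"
    then show "\<not> (card (wn E (W - {a, r, b}) x) = 1 \<and> card (wn E (W - {a, r, b}) y) = 1)"
      using eqn g unfolding good_def by auto
  qed
qed

lemma card_diff_ge:
  assumes "finite B"
  shows "K \<le> card ({1..K::nat} - B) + card B"
proof -
  have "{1..K} \<subseteq> ({1..K} - B) \<union> B" by auto
  then have "card {1..K} \<le> card (({1..K} - B) \<union> B)" using assms by (intro card_mono) auto
  also have "\<dots> \<le> card ({1..K} - B) + card B" by (rule card_Un_le)
  finally show ?thesis by simp
qed

lemma lin_sub: "{x::nat. x + s = t} \<subseteq> {t - s}" by auto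

lemma card_lin: "card {x::nat. x + s = t} \<le> 1"
  using card_mono[OF _ lin_sub[of s t]] by simp

lemma fin_lin: "finite {x::nat. x + s = t}"
  using finite_subset[OF lin_sub] by simp

lemma card_le2:
  assumes "finite H" "\<And>i j l. i \<in> H \<Longrightarrow> j \<in> H \<Longrightarrow> l \<in> H \<Longrightarrow> i \<noteq> j \<Longrightarrow> i \<noteq> l \<Longrightarrow> j \<noteq> l \<Longrightarrow> False"
  shows "card H \<le> 2"
proof (rule ccontr)
  assume "\<not> card H \<le> 2"
  then have c: "card H \<ge> 3" by simp
  then obtain i where i: "i \<in> H" by (metis card.empty ex_in_conv not_numeral_le_zero)
  have "card (H - {i}) \<ge> 2" using c i assms(1) by simp
  then obtain j where j: "j \<in> H - {i}" by (metis card.empty ex_in_conv not_numeral_le_zero)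
  have "card (H - {i} - {j}) \<ge> 1" using c i j assms(1) by simp
  then obtain l where l: "l \<in> H - {i} - {j}" by (metis card.empty ex_in_conv not_one_le_zero)
  show False using assms(2)[of i j l] i j l by blast
qed

lemma card_U4:
  "card (A \<union> B \<union> C \<union> D) \<le> card A + card B + card C + card D"
proof -
  have "card (A \<union> B \<union> C \<union> D) \<le> card (A \<union> B \<union> C) + card D" by (rule card_Un_le)
  moreover have "card (A \<union> B \<union> C) \<le> card (A \<union> B) + card C" by (rule card_Un_le)
  moreover have "card (A \<union> B) \<le> card A + card B" by (rule card_Un_le)
  ultimately show ?thesis by linarith
qed

lemma card_U3:
  "card (A \<union> B \<union> C) \<le> card A + card B + card C"
proof -
  have "card (A \<union> B \<union> C) \<le> card (A \<union> B) + card C" by (rule card_Un_le)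
  moreover have "card (A \<union> B) \<le> card A + card B" by (rule card_Un_le)
  ultimately show ?thesis by linarith
qed

lemma joint:
  fixes K D dr capr sa sb Sa Sb Sr :: nat and Fa Fb Fr :: "nat set" and cr :: "nat \<Rightarrow> nat" and adj :: bool
  assumes KD: "3 * D + 4 \<le> 2 * K"
    and fin: "finite Fa" "finite Fb" "finite Fr"
    and cFa: "card Fa + 1 + (if adj then 1 else 0) \<le> D"
    and cFb: "card Fb + 1 + (if adj then 1 else 0) \<le> D"
    and dr: "2 \<le> dr" "dr \<le> D" "card Fr + 2 \<le> dr" "dr \<le> 2 * capr"
    and crq': "\<forall>i. i \<noteq> 0 \<longrightarrow> cr i \<le> capr"
    and f2': "\<forall>i j. i \<noteq> j \<longrightarrow> i \<noteq> 0 \<longrightarrow> j \<noteq> 0 \<longrightarrow> cr i + cr j + 2 \<le> dr"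
    and f3': "\<forall>i j l. i \<noteq> j \<longrightarrow> i \<noteq> l \<longrightarrow> j \<noteq> l \<longrightarrow> i \<noteq> 0 \<longrightarrow> j \<noteq> 0 \<longrightarrow> l \<noteq> 0 \<longrightarrow>
               cr i + cr j + cr l + 2 \<le> dr"
  shows "\<exists>x1 x2. x1 \<in> {1..K} \<and> x2 \<in> {1..K} \<and> Sa + x1 \<notin> Fa \<and> Sb + x2 \<notin> Fb \<and>
     Sr + x1 + x2 \<notin> Fr \<and> x2 + Sr \<noteq> Sa \<and> x1 + Sr \<noteq> Sb \<and> (adj \<longrightarrow> Sa + x1 \<noteq> Sb + x2) \<and>
     x1 \<noteq> sa \<and> x2 \<noteq> sb \<and>
     (\<forall>i. i \<noteq> 0 \<longrightarrow> cr i + (if i = x1 then 1 else 0) + (if i = x2 then 1 else 0) \<le> capr)"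
proof -
  have crq: "\<And>i. i \<noteq> 0 \<Longrightarrow> cr i \<le> capr" using crq' by blast
  have f2: "\<And>i j. i \<noteq> j \<Longrightarrow> i \<noteq> 0 \<Longrightarrow> j \<noteq> 0 \<Longrightarrow> cr i + cr j + 2 \<le> dr" using f2' by blast
  have f3: "\<And>i j l. i \<noteq> j \<Longrightarrow> i \<noteq> l \<Longrightarrow> j \<noteq> l \<Longrightarrow> i \<noteq> 0 \<Longrightarrow> j \<noteq> 0 \<Longrightarrow> l \<noteq> 0 \<Longrightarrow>
               cr i + cr j + cr l + 2 \<le> dr" using f3' by blast
  define Xa where "Xa = {x. Sa + x \<in> Fa}"
  define Xb where "Xb = {x. Sb + x \<in> Fb}"
  define Ya where "Ya = {x::nat. x + Sr = Sb}"
  define Yb where "Yb = {x::nat. x + Sr = Sa}"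
  have fXa: "finite Xa" "card Xa \<le> card Fa" unfolding Xa_def using fin fin_preimage_add card_preimage_add by auto
  have fXb: "finite Xb" "card Xb \<le> card Fb" unfolding Xb_def using fin fin_preimage_add card_preimage_add by auto
  have fYa: "finite Ya" "card Ya \<le> 1" unfolding Ya_def using fin_lin card_lin by auto
  have fYb: "finite Yb" "card Yb \<le> 1" unfolding Yb_def using fin_lin card_lin by auto
  show ?thesis
  proof (cases "dr = 2")
    case True
    have cr0: "\<And>i. i \<noteq> 0 \<Longrightarrow> cr i = 0"
    proof -
      fix i :: nat assume i: "i \<noteq> 0"
      have "cr i + cr (i + 1) + 2 \<le> dr" using f2[of i "i+1"] i by simp
      then show "cr i = 0" using True by simp
    qed
    have Fr0: "Fr = {}" using dr(3) True fin(3) by simp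
    have D2: "D \<ge> 2" using dr True by simp
    let ?B2 = "Xb \<union> Yb \<union> {sb}"
    have "card ?B2 \<le> card Xb + card Yb + card {sb}" by (rule card_U3)
    moreover have "K \<le> card ({1..K} - ?B2) + card ?B2" using card_diff_ge fXb fYb by simp
    moreover have "card Fb + 1 \<le> D" using cFb by (cases adj) auto
    ultimately have "card ({1..K} - ?B2) \<ge> 1" using fXb fYb KD D2 by simp
    then obtain x2 where x2: "x2 \<in> {1..K} - ?B2" by (metis card.empty ex_in_conv not_one_le_zero)
    define Z where "Z = (if adj then {x. Sa + x = Sb + x2} else {})"
    have fZ: "finite Z" "card Z \<le> (if adj then 1 else 0)"
    proof -
      have "{x. Sa + x = Sb + x2} = {x. x + Sa = Sb + x2}" by (auto simp: add.commute)
      then show "finite Z" "card Z \<le> (if adj then 1 else 0)" unfolding Z_def using fin_lin card_lin by auto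
    qed
    let ?B1 = "Xa \<union> Ya \<union> {sa, x2} \<union> Z"
    have "card ?B1 \<le> card Xa + card Ya + card {sa, x2} + card Z" by (rule card_U4)
    moreover have "card {sa, x2} \<le> 2" by (simp add: card_insert_le_m1)
    moreover have "K \<le> card ({1..K} - ?B1) + card ?B1" using card_diff_ge fXa fYa fZ by simp
    moreover have "card Fa + 1 + card Z \<le> D" using cFa fZ by (cases adj) auto
    ultimately have "card ({1..K} - ?B1) \<ge> 1" using fXa fYa KD D2 by simp
    then obtain x1 where x1: "x1 \<in> {1..K} - ?B1" by (metis card.empty ex_in_conv not_one_le_zero)
    have q: "\<forall>i. i \<noteq> 0 \<longrightarrow> cr i + (if i = x1 then 1 else 0) + (if i = x2 then 1 else 0) \<le> capr"
    proof (intro allI impI)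
      fix i :: nat assume i: "i \<noteq> 0"
      have "capr \<ge> 1" using dr True by simp
      moreover have "x1 \<noteq> x2" using x1 by blast
      ultimately show "cr i + (if i = x1 then 1 else 0) + (if i = x2 then 1 else 0) \<le> capr"
        using cr0[OF i] by auto
    qed
    show ?thesis
      apply (rule exI[of _ x1], rule exI[of _ x2])
      using x1 x2 q Fr0 unfolding Xa_def Xb_def Ya_def Yb_def Z_def by auto
  next
    case False
    then have dr3: "dr \<ge> 3" using dr by simp
    have capr2: "capr \<ge> 2" using dr3 dr(4) by simp
    define Fs where "Fs = {t. Sr + t \<in> Fr}"
    have fFs: "finite Fs" "card Fs \<le> card Fr" unfolding Fs_def using fin fin_preimage_add card_preimage_add by auto
    obtain P1 P2 where P: "P1 \<subseteq> {1..K} - (Xa \<union> Ya \<union> {sa})" "P2 \<subseteq> {1..K} - (Xb \<union> Yb \<union> {sb})"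
      "card P1 + card P2 + card Fa + card Fb + 6 \<ge> 2 * K"
      "card P1 + card Fa + 4 \<ge> K" "card P2 + card Fb + 4 \<ge> K"
      "\<And>x1 x2 i. x1 \<in> P1 \<Longrightarrow> x2 \<in> P2 \<Longrightarrow> i \<noteq> 0 \<Longrightarrow> cr i + (if i = x1 then 1 else 0) + (if i = x2 then 1 else 0) \<le> capr"
    proof (cases "\<exists>s. s \<noteq> 0 \<and> capr \<le> cr s")
      case True
      then obtain s where s: "s \<noteq> 0" "capr \<le> cr s" by blast
      have oth: "\<And>i. i \<noteq> 0 \<Longrightarrow> i \<noteq> s \<Longrightarrow> cr i + 2 \<le> capr"
      proof -
        fix i :: nat assume "i \<noteq> 0" "i \<noteq> s"
        then have "cr i + cr s + 2 \<le> dr" using f2 s by blast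
        then show "cr i + 2 \<le> capr" using s dr(4) by linarith
      qed
      let ?P1 = "{1..K} - (Xa \<union> Ya \<union> {sa} \<union> {s})" and ?P2 = "{1..K} - (Xb \<union> Yb \<union> {sb} \<union> {s})"
      have "K \<le> card ?P1 + card (Xa \<union> Ya \<union> {sa} \<union> {s})" using card_diff_ge fXa fYa by simp
      moreover have "card (Xa \<union> Ya \<union> {sa} \<union> {s}) \<le> card Xa + card Ya + card {sa} + card {s}" by (rule card_U4)
      moreover have "K \<le> card ?P2 + card (Xb \<union> Yb \<union> {sb} \<union> {s})" using card_diff_ge fXb fYb by simp
      moreover have "card (Xb \<union> Yb \<union> {sb} \<union> {s}) \<le> card Xb + card Yb + card {sb} + card {s}" by (rule card_U4)
      ultimately have sz: "card ?P1 + card ?P2 + card Fa + card Fb + 6 \<ge> 2 * K"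
        "card ?P1 + card Fa + 4 \<ge> K" "card ?P2 + card Fb + 4 \<ge> K" using fXa fXb fYa fYb by simp_all
      have qq: "\<And>x1 x2 i. x1 \<in> ?P1 \<Longrightarrow> x2 \<in> ?P2 \<Longrightarrow> i \<noteq> 0 \<Longrightarrow> cr i + (if i = x1 then 1 else 0) + (if i = x2 then 1 else 0) \<le> capr"
      proof -
        fix x1 x2 i :: nat assume h: "x1 \<in> ?P1" "x2 \<in> ?P2" "i \<noteq> 0"
        show "cr i + (if i = x1 then 1 else 0) + (if i = x2 then 1 else 0) \<le> capr"
        proof (cases "i = s")
          case True
          then show ?thesis using h crq[OF h(3)] by auto
        next
          case False
          then show ?thesis using oth[OF h(3) False] by auto
        qed
      qed
      show ?thesis
        apply (rule that[of ?P1 ?P2])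
        using sz qq by auto
    next
      case False
      then have ns: "\<And>i. i \<noteq> 0 \<Longrightarrow> cr i < capr" by (meson not_le)
      define H where "H = {i \<in> {1..K}. capr \<le> cr i + 1}"
      have fH: "finite H" unfolding H_def by simp
      have cH: "card H \<le> 2"
      proof (rule card_le2[OF fH])
        fix i j l assume "i \<in> H" "j \<in> H" "l \<in> H" "i \<noteq> j" "i \<noteq> l" "j \<noteq> l"
        then have "capr \<le> cr i + 1" "capr \<le> cr j + 1" "capr \<le> cr l + 1" "i \<noteq> 0" "j \<noteq> 0" "l \<noteq> 0"
          and "cr i + cr j + cr l + 2 \<le> dr" using f3 unfolding H_def by auto
        then show False using dr(4) capr2 by linarith
      qed
      let ?P1 = "{1..K} - (Xa \<union> Ya \<union> {sa} \<union> H)" and ?P2 = "{1..K} - (Xb \<union> Yb \<union> {sb})"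
      have "K \<le> card ?P1 + card (Xa \<union> Ya \<union> {sa} \<union> H)" using card_diff_ge fXa fYa fH by simp
      moreover have "card (Xa \<union> Ya \<union> {sa} \<union> H) \<le> card Xa + card Ya + card {sa} + card H" by (rule card_U4)
      moreover have "K \<le> card ?P2 + card (Xb \<union> Yb \<union> {sb})" using card_diff_ge fXb fYb by simp
      moreover have "card (Xb \<union> Yb \<union> {sb}) \<le> card Xb + card Yb + card {sb}" by (rule card_U3)
      ultimately have sz: "card ?P1 + card ?P2 + card Fa + card Fb + 6 \<ge> 2 * K"
        "card ?P1 + card Fa + 4 \<ge> K" "card ?P2 + card Fb + 4 \<ge> K" using fXa fXb fYa fYb cH by simp_all
      have qq: "\<And>x1 x2 i. x1 \<in> ?P1 \<Longrightarrow> x2 \<in> ?P2 \<Longrightarrow> i \<noteq> 0 \<Longrightarrow> cr i + (if i = x1 then 1 else 0) + (if i = x2 then 1 else 0) \<le> capr"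
      proof -
        fix x1 x2 i :: nat assume h: "x1 \<in> ?P1" "x2 \<in> ?P2" "i \<noteq> 0"
        show "cr i + (if i = x1 then 1 else 0) + (if i = x2 then 1 else 0) \<le> capr"
        proof (cases "i = x1")
          case True
          then have "i \<notin> H" "i \<in> {1..K}" using h by auto
          then have "cr i + 2 \<le> capr" unfolding H_def by simp
          then show ?thesis by auto
        next
          case False
          then show ?thesis using ns[OF h(3)] by auto
        qed
      qed
      show ?thesis
        apply (rule that[of ?P1 ?P2])
        using sz qq by auto
    qed
    have P1s: "P1 \<subseteq> {1..K}" "P2 \<subseteq> {1..K}" using P(1,2) by auto
    have fP1: "finite P1" "finite P2" using finite_subset[OF P1s(1)] finite_subset[OF P1s(2)] by auto
    have D3: "D \<ge> 3" using dr3 dr(2) by simp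
    have cP1: "card P1 \<le> K" "card P2 \<le> K" using P1s by (metis card_atLeastAtMost card_mono diff_Suc_1 finite_atLeastAtMost)+
    have ne1: "P1 \<noteq> {}"
    proof
      assume "P1 = {}"
      then show False using P(4) cFa KD D3 by (cases adj) auto
    qed
    have ne2: "P2 \<noteq> {}"
    proof
      assume "P2 = {}"
      then show False using P(5) cFb KD D3 by (cases adj) auto
    qed
    obtain x1 x2 where xx: "x1 \<in> P1" "x2 \<in> P2" "x1 + x2 \<notin> Fs" "adj \<longrightarrow> x1 + Sa \<noteq> x2 + Sb"
    proof (cases adj)
      case True
      have "card Fs + 4 \<le> card P1 + card P2" using P(3) fFs cFa cFb KD dr True by auto
      then obtain x1 x2 where "x1 \<in> P1" "x2 \<in> P2" "x1 + Sa \<noteq> x2 + Sb" "x1 + x2 \<notin> Fs"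
        using sum_res[OF fP1 fFs(1) ne1 ne2, of Sa Sb] by blast
      then show ?thesis using that by blast
    next
      case False
      have "card Fs + 2 \<le> card P1 + card P2" using P(3) fFs cFa cFb KD dr False by auto
      then obtain x1 x2 where "x1 \<in> P1" "x2 \<in> P2" "x1 + x2 \<notin> Fs"
        using sum_unres[OF fP1 fFs(1) ne1 ne2] by blast
      then show ?thesis using that False by blast
    qed
    show ?thesis
      apply (rule exI[of _ x1], rule exI[of _ x2])
      using xx P(1) P(2) P(6)[of x1 x2] unfolding Fs_def Xa_def Xb_def Ya_def Yb_def
      by (auto simp: add.commute add.left_commute)
  qed
qed

definition invr :: "'a set \<Rightarrow> ('a \<Rightarrow> 'a \<Rightarrow> bool) \<Rightarrow> nat \<Rightarrow> 'a set \<Rightarrow> ('a set \<Rightarrow> nat) \<Rightarrow> bool" where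
  "invr V E K W c \<longleftrightarrow> W \<subseteq> V \<and>
     (\<forall>u v. E u v \<longrightarrow> u \<in> W \<longrightarrow> v \<in> W \<longrightarrow> c {u, v} = 0) \<and>
     (\<forall>u v. E u v \<longrightarrow> (u \<notin> W \<or> v \<notin> W) \<longrightarrow> c {u, v} \<in> {1..K}) \<and>
     pqm V E c \<and>
     (\<forall>u v. E u v \<longrightarrow> u \<notin> W \<longrightarrow> v \<notin> W \<longrightarrow> sigma V E c u \<noteq> sigma V E c v) \<and>
     good E W"

lemma sigma_out:
  assumes sg: "simple_graph V E" and t: "t \<notin> W"
    and mods: "\<And>e. c' e \<noteq> c e \<Longrightarrow> e \<subseteq> W"
  shows "sigma V E c' t = sigma V E c t"
proof (rule sigma_cong)
  fix z assume "z \<in> nbrs V E t"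
  have "\<not> {t, z} \<subseteq> W" using t by simp
  then show "c' {t, z} = c {t, z}" using mods by blast
qed

lemma transfer:
  assumes sg: "simple_graph V E" and iv: "invr V E K W c" and W': "W' \<subseteq> W" and g: "good E W'"
    and mods: "\<And>e. c' e \<noteq> c e \<Longrightarrow> e \<subseteq> W \<and> \<not> e \<subseteq> W'"
    and newcol: "\<And>u v. E u v \<Longrightarrow> u \<in> W \<Longrightarrow> v \<in> W \<Longrightarrow> (u \<notin> W' \<or> v \<notin> W') \<Longrightarrow> c' {u, v} \<in> {1..K}"
    and q: "pqm V E c'"
    and newsum: "\<And>u v. E u v \<Longrightarrow> u \<in> W - W' \<Longrightarrow> v \<notin> W' \<Longrightarrow> sigma V E c' u \<noteq> sigma V E c' v"
  shows "invr V E K W' c'"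
  unfolding invr_def
proof (intro conjI allI impI)
  show "W' \<subseteq> V" using W' iv unfolding invr_def by blast
next
  fix u v assume "E u v" "u \<in> W'" "v \<in> W'"
  then have "c' {u, v} = c {u, v}" using mods by blast
  moreover have "c {u, v} = 0" using iv \<open>E u v\<close> \<open>u \<in> W'\<close> \<open>v \<in> W'\<close> W' unfolding invr_def by blast
  ultimately show "c' {u, v} = 0" by simp
next
  fix u v assume e: "E u v" and o: "u \<notin> W' \<or> v \<notin> W'"
  show "c' {u, v} \<in> {1..K}"
  proof (cases "u \<in> W \<and> v \<in> W")
    case True
    then show ?thesis using newcol e o by blast
  next
    case False
    then have "c' {u, v} = c {u, v}" using mods by blast
    then show ?thesis using iv e False unfolding invr_def by auto
  qed
next
  show "pqm V E c'" by (rule q)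
next
  fix u v assume e: "E u v" and u: "u \<notin> W'" and v: "v \<notin> W'"
  show "sigma V E c' u \<noteq> sigma V E c' v"
  proof (cases "u \<in> W")
    case True
    then show ?thesis using newsum e u v by blast
  next
    case uW: False
    show ?thesis
    proof (cases "v \<in> W")
      case True
      then have "sigma V E c' v \<noteq> sigma V E c' u" using newsum[OF sg_sym[OF sg e]] u v by blast
      then show ?thesis by metis
    next
      case False
      have "sigma V E c' u = sigma V E c u" using sigma_out[OF sg uW] mods by blast
      moreover have "sigma V E c' v = sigma V E c v" using sigma_out[OF sg False] mods by blast
      ultimately show ?thesis using iv e uW False unfolding invr_def by auto
    qed
  qed
next
  show "good E W'" by (rule g)
qed

lemma doubleton_same: "{w, q} = {w, q'} \<longleftrightarrow> q = q'"
  by (auto simp: doubleton_eq_iff)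

lemma greedy:
  assumes sg: "simple_graph V E" and K: "3 \<le> K" and fin: "finite Q"
  shows "(\<forall>q\<in>Q. E w q) \<Longrightarrow> pqm V E c \<Longrightarrow> (\<forall>q\<in>Q. c {w, q} = 0) \<Longrightarrow>
    \<exists>c'. pqm V E c' \<and> (\<forall>q\<in>Q. c' {w, q} \<in> {1..K}) \<and> (\<forall>e. c' e \<noteq> c e \<longrightarrow> (\<exists>q\<in>Q. e = {w, q}))"
  using fin
proof (induction Q rule: finite_induct)
  case empty
  then show ?case by blast
next
  case (insert q Q)
  obtain c1 where c1: "pqm V E c1" "\<forall>q\<in>Q. c1 {w, q} \<in> {1..K}" "\<forall>e. c1 e \<noteq> c e \<longrightarrow> (\<exists>q\<in>Q. e = {w, q})"
    using insert by auto
  have z: "c1 {w, q} = 0"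
  proof -
    have "\<forall>q'\<in>Q. {w, q} \<noteq> {w, q'}" using insert(2) doubleton_same by metis
    then have "c1 {w, q} = c {w, q}" using c1(3) by blast
    then show ?thesis using insert by simp
  qed
  have e: "E w q" using insert by simp
  obtain x where x: "x \<in> {1..K}" "pqm V E (c1({w, q} := x))"
    using one_edge[OF sg e z c1(1), of "{}" K] K by auto
  show ?case
  proof (intro exI conjI)
    show "pqm V E (c1({w, q} := x))" by (rule x(2))
    show "\<forall>q'\<in>insert q Q. (c1({w, q} := x)) {w, q'} \<in> {1..K}"
      using x(1) c1(2) by (auto simp: doubleton_same)
    show "\<forall>e. (c1({w, q} := x)) e \<noteq> c e \<longrightarrow> (\<exists>q'\<in>insert q Q. e = {w, q'})"
      using c1(3) by auto
  qed
qed

lemma stepA: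
  assumes sg: "simple_graph V E" and K: "max_deg V E + 2 \<le> K"
    and iv: "invr V E K W c" and w: "w \<in> W" and p: "p \<in> W" "E w p"
    and g': "good E (W - {w})"
  shows "\<exists>c'. invr V E K (W - {w}) c'"
proof -
  have WV: "W \<subseteq> V" using iv unfolding invr_def by blast
  have fV: "finite V" using sg_fin[OF sg] .
  have wV: "w \<in> V" using w WV by blast
  have in0: "\<And>u v. E u v \<Longrightarrow> u \<in> W \<Longrightarrow> v \<in> W \<Longrightarrow> c {u, v} = 0" using iv unfolding invr_def by blast
  have pq0: "pqm V E c" using iv unfolding invr_def by blast
  have pn0: "p \<in> nbrs V E w" using p(2) nbrs_iff[OF sg] by simp
  have "1 \<le> deg V E w" unfolding deg_def using pn0 fin_nbrs[OF sg] by (metis One_nat_def Suc_leI card_gt_0_iff empty_iff)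
  then have K3: "3 \<le> K" using K deg_le_max[OF sg wV] by linarith
  define Q where "Q = wn E W w - {p}"
  have finQ: "finite Q" unfolding Q_def wn_def using fV WV finite_subset by (metis (no_types, lifting) finite_Diff mem_Collect_eq subsetI subset_trans)
  have QE: "\<forall>q\<in>Q. E w q" "\<forall>q\<in>Q. q \<in> W" "\<forall>q\<in>Q. q \<noteq> p" unfolding Q_def wn_def by auto
  have Q0: "\<forall>q\<in>Q. c {w, q} = 0" using QE in0 w by blast
  obtain c1 where c1: "pqm V E c1" "\<forall>q\<in>Q. c1 {w, q} \<in> {1..K}" "\<forall>e. c1 e \<noteq> c e \<longrightarrow> (\<exists>q\<in>Q. e = {w, q})"
    using greedy[OF sg K3 finQ QE(1) pq0 Q0] by blast
  have p0: "c1 {w, p} = 0"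
  proof -
    have "\<forall>q\<in>Q. {w, p} \<noteq> {w, q}" using QE(3) doubleton_same by metis
    then have "c1 {w, p} = c {w, p}" using c1(3) by blast
    then show ?thesis using in0[OF p(2) w p(1)] by simp
  qed
  define N where "N = nbrs V E w - W"
  define X where "X = {x. \<exists>v\<in>N. sigma V E c1 w + x = sigma V E c1 v}"
  have finN: "finite N" unfolding N_def using fin_nbrs[OF sg] by simp
  have XN: "X \<subseteq> (\<lambda>v. sigma V E c1 v - sigma V E c1 w) ` N" unfolding X_def by force
  have finX: "finite X" using finite_subset[OF XN] finN by simp
  have "card X \<le> card N" using card_mono[OF _ XN] finN card_image_le[OF finN] by (meson finite_imageI le_trans)
  moreover have "card N + 1 \<le> deg V E w"
  proof -
    have pn: "p \<in> nbrs V E w" using p(2) nbrs_iff[OF sg] by simp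
    have "N \<subseteq> nbrs V E w - {p}" unfolding N_def using p(1) by auto
    then have "card N \<le> card (nbrs V E w - {p})" using fin_nbrs[OF sg] by (simp add: card_mono)
    also have "\<dots> = deg V E w - 1" unfolding deg_def using pn fin_nbrs[OF sg] by simp
    finally show ?thesis using pn fin_nbrs[OF sg] unfolding deg_def by (metis One_nat_def Suc_leI add.commute card_gt_0_iff empty_iff le_diff_conv2 plus_1_eq_Suc)
  qed
  moreover have "deg V E w \<le> max_deg V E" using deg_le_max[OF sg wV] .
  ultimately have cX: "card X + 3 \<le> K" using K by linarith
  obtain x where x: "x \<in> {1..K}" "x \<notin> X" "pqm V E (c1({w, p} := x))"
    using one_edge[OF sg p(2) p0 c1(1) finX cX] by blast
  define c2 where "c2 = c1({w, p} := x)"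
  have mods2: "\<And>e. c2 e \<noteq> c e \<Longrightarrow> e = {w, p} \<or> (\<exists>q\<in>Q. e = {w, q})"
    unfolding c2_def using c1(3) by (metis fun_upd_other)
  show ?thesis
  proof (rule exI, rule transfer[OF sg iv _ g'])
    show "W - {w} \<subseteq> W" by blast
  next
    fix e assume "c2 e \<noteq> c e"
    then have "e = {w, p} \<or> (\<exists>q\<in>Q. e = {w, q})" by (rule mods2)
    then show "e \<subseteq> W \<and> \<not> e \<subseteq> W - {w}" using w p QE(2) by auto
  next
    fix u v assume e: "E u v" "u \<in> W" "v \<in> W" "u \<notin> W - {w} \<or> v \<notin> W - {w}"
    have key: "\<And>y. E w y \<Longrightarrow> y \<in> W \<Longrightarrow> c2 {w, y} \<in> {1..K}"
    proof -
      fix y assume y: "E w y" "y \<in> W"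
      show "c2 {w, y} \<in> {1..K}"
      proof (cases "y = p")
        case True
        then show ?thesis unfolding c2_def using x(1) by simp
      next
        case False
        then have "y \<in> Q" unfolding Q_def wn_def using y by simp
        moreover have "{w, y} \<noteq> {w, p}" using False doubleton_same by metis
        ultimately show ?thesis unfolding c2_def using c1(2) by simp
      qed
    qed
    show "c2 {u, v} \<in> {1..K}"
    proof (cases "u = w")
      case True
      then show ?thesis using key e by blast
    next
      case False
      then have "v = w" using e by blast
      then show ?thesis using key[of u] e sg_sym[OF sg e(1)] by (simp add: insert_commute)
    qed
  next
    show "pqm V E c2" unfolding c2_def by (rule x(3))
  next
    fix u v assume e: "E u v" "u \<in> W - (W - {w})" "v \<notin> W - {w}"
    then have uw: "u = w" by blast
    have vw: "v \<noteq> w" using e(1) uw sg_irr[OF sg] by blast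
    then have vW: "v \<notin> W" using e by blast
    have vN: "v \<in> N" unfolding N_def using e(1) uw vW nbrs_iff[OF sg] by simp
    have s1: "sigma V E c2 w = sigma V E c1 w + x" unfolding c2_def using sigma_upd[of V E w p c1 x w, OF sg p(2) p0] by simp
    have vp: "v \<noteq> p" using vW p by blast
    have s2: "sigma V E c2 v = sigma V E c1 v" unfolding c2_def using sigma_upd[of V E w p c1 x v, OF sg p(2) p0] vw vp by simp
    have "sigma V E c1 w + x \<noteq> sigma V E c1 v" using x(2) vN unfolding X_def by blast
    then show "sigma V E c2 u \<noteq> sigma V E c2 v" using s1 s2 uw by simp
  qed
qed

lemma closed_edges:
  assumes sym: "\<And>u v. E u v \<Longrightarrow> E v u" and cl: "closed3 E W a r b"
    and e: "E u v" "u \<in> W" "v \<in> W" "u \<in> {a, r, b} \<or> v \<in> {a, r, b}"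
  shows "{u, v} = {a, r} \<or> {u, v} = {b, r} \<or> ({u, v} = {a, b} \<and> E a b)"
proof -
  have h: "\<And>x y. E x y \<Longrightarrow> x \<in> W \<Longrightarrow> y \<in> W \<Longrightarrow> x \<in> {a, r, b} \<Longrightarrow>
      {x, y} = {a, r} \<or> {x, y} = {b, r} \<or> ({x, y} = {a, b} \<and> E a b)"
  proof -
    fix x y assume xy: "E x y" "x \<in> W" "y \<in> W" "x \<in> {a, r, b}"
    have yn: "y \<in> wn E W x" unfolding wn_def using xy by simp
    show "{x, y} = {a, r} \<or> {x, y} = {b, r} \<or> ({x, y} = {a, b} \<and> E a b)"
    proof -
      { assume "x = a"
        then have "y = r \<or> y = b" using yn cl unfolding closed3_def by blast
        then have ?thesis using \<open>x = a\<close> xy(1) by auto }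
      moreover
      { assume "x = r"
        then have "y = a \<or> y = b" using yn cl unfolding closed3_def by blast
        then have ?thesis using \<open>x = r\<close> by (auto simp: insert_commute) }
      moreover
      { assume "x = b"
        then have "y = r \<or> y = a" using yn cl unfolding closed3_def by blast
        then have ?thesis using \<open>x = b\<close> xy(1) sym by (auto simp: insert_commute) }
      ultimately show ?thesis using xy(4) by blast
    qed
  qed
  show ?thesis
  proof (cases "u \<in> {a, r, b}")
    case True
    then show ?thesis using h e by blast
  next
    case False
    then have "v \<in> {a, r, b}" using e by blast
    then have "{v, u} = {a, r} \<or> {v, u} = {b, r} \<or> ({v, u} = {a, b} \<and> E a b)" using h[OF sym[OF e(1)] e(3) e(2)] by blast
    then show ?thesis by (simp add: insert_commute)
  qed
qed

lemma card_out:
  assumes sg: "simple_graph V E" and I: "I \<subseteq> nbrs V E v" "I \<subseteq> W"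
  shows "card (sigma V E c ` (nbrs V E v - W)) + card I \<le> deg V E v"
proof -
  have fin: "finite (nbrs V E v)" using fin_nbrs[OF sg] .
  have "card (sigma V E c ` (nbrs V E v - W)) \<le> card (nbrs V E v - W)" using fin by (simp add: card_image_le)
  also have "\<dots> \<le> card (nbrs V E v - I)" using fin I by (intro card_mono) auto
  also have "\<dots> = deg V E v - card I" unfolding deg_def using fin I by (simp add: card_Diff_subset finite_subset)
  finally show ?thesis using card_mono[OF fin I(1)] unfolding deg_def by linarith
qed

lemma stepB:
  assumes sg: "simple_graph V E" and KD: "3 * max_deg V E + 4 \<le> 2 * K"
    and iv: "invr V E K W c" and cl: "closed3 E W a r b"
  shows "\<exists>c'. invr V E K (W - {a, r, b}) c'"
proof -
  define D where "D = max_deg V E"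
  have sym: "\<And>u v. E u v \<Longrightarrow> E v u" using sg_sym[OF sg] by blast
  have irr: "\<And>v. \<not> E v v" using sg_irr[OF sg] by blast
  have WV: "W \<subseteq> V" using iv unfolding invr_def by blast
  have fV: "finite V" using sg_fin[OF sg] .
  have fW: "finite W" using finite_subset[OF WV fV] .
  have T: "a \<in> W" "r \<in> W" "b \<in> W" "a \<noteq> b" "E r a" "E r b" using cl unfolding closed3_def by auto
  have Ear: "E a r" and Ebr: "E b r" using sym T by auto
  have ra: "r \<noteq> a" and rb: "r \<noteq> b" using T irr by auto
  have TV: "a \<in> V" "r \<in> V" "b \<in> V" using T WV by auto
  have in0: "\<And>u v. E u v \<Longrightarrow> u \<in> W \<Longrightarrow> v \<in> W \<Longrightarrow> c {u, v} = 0" using iv unfolding invr_def by blast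
  have pq: "pqm V E c" using iv unfolding invr_def by blast
  have g: "good E W" using iv unfolding invr_def by blast
  have g': "good E (W - {a, r, b})" using closed3_good[OF sym fW g cl] .
  have nb: "\<And>x y. y \<in> nbrs V E x \<longleftrightarrow> E x y" using nbrs_iff[OF sg] by blast
  have degD: "\<And>v. v \<in> V \<Longrightarrow> deg V E v \<le> D" unfolding D_def using deg_le_max[OF sg] by blast
  have dr2: "2 \<le> deg V E r"
  proof -
    have "{a, b} \<subseteq> nbrs V E r" using T nb by auto
    then have "card {a, b} \<le> deg V E r" unfolding deg_def using fin_nbrs[OF sg] by (simp add: card_mono)
    then show ?thesis using T by simp
  qed
  have D2: "2 \<le> D" using dr2 degD[OF TV(2)] by simp
  have K5: "5 \<le> K" using KD D2 unfolding D_def by linarith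
  obtain c0 where c0: "pqm V E c0" "\<And>e. c0 e \<noteq> c e \<Longrightarrow> e = {a, b}" "E a b \<Longrightarrow> c0 {a, b} \<in> {1..K}"
  proof (cases "E a b")
    case True
    have z: "c {a, b} = 0" using in0[OF True T(1) T(3)] .
    obtain x where x: "x \<in> {1..K}" "pqm V E (c({a, b} := x))" using one_edge[OF sg True z pq, of "{}" K] K5 by auto
    show ?thesis by (rule that[of "c({a, b} := x)"]) (use x in \<open>auto split: if_splits\<close>)
  next
    case False
    show ?thesis by (rule that[of c]) (use pq False in auto)
  qed
  have ar_ab: "{a, r} \<noteq> {a, b}" using rb by (auto simp: doubleton_eq_iff)
  have br_ab: "{b, r} \<noteq> {a, b}" using ra T(4) by (auto simp: doubleton_eq_iff)
  have br_ar: "{b, r} \<noteq> {a, r}" using T(4) ra by (auto simp: doubleton_eq_iff)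
  have z1: "c0 {a, r} = 0" using c0(2) ar_ab in0[OF Ear T(1) T(2)] by metis
  have z2: "c0 {b, r} = 0" using c0(2) br_ab in0[OF Ebr T(3) T(2)] by metis
  define adj where "adj = E a b"
  define Sa where "Sa = sigma V E c0 a"
  define Sb where "Sb = sigma V E c0 b"
  define Sr where "Sr = sigma V E c0 r"
  define Fa where "Fa = sigma V E c0 ` (nbrs V E a - W)"
  define Fb where "Fb = sigma V E c0 ` (nbrs V E b - W)"
  define Fr where "Fr = sigma V E c0 ` (nbrs V E r - W)"
  have fF: "finite Fa" "finite Fb" "finite Fr" unfolding Fa_def Fb_def Fr_def using fin_nbrs[OF sg] by auto
  have cFa: "card Fa + 1 + (if adj then 1 else 0) \<le> D"
  proof -
    let ?I = "if adj then {r, b} else {r}"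
    have "?I \<subseteq> nbrs V E a" "?I \<subseteq> W" using Ear T nb unfolding adj_def by auto
    then have "card Fa + card ?I \<le> deg V E a" unfolding Fa_def by (rule card_out[OF sg])
    moreover have "card ?I = 1 + (if adj then 1 else 0)" using rb by simp
    ultimately show ?thesis using degD[OF TV(1)] by simp
  qed
  have cFb: "card Fb + 1 + (if adj then 1 else 0) \<le> D"
  proof -
    let ?I = "if adj then {r, a} else {r}"
    have "?I \<subseteq> nbrs V E b" "?I \<subseteq> W" using Ebr T nb sym unfolding adj_def by auto
    then have "card Fb + card ?I \<le> deg V E b" unfolding Fb_def by (rule card_out[OF sg])
    moreover have "card ?I = 1 + (if adj then 1 else 0)" using ra by simp
    ultimately show ?thesis using degD[OF TV(3)] by simp
  qed
  have cFr: "card Fr + 2 \<le> deg V E r"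
  proof -
    have "{a, b} \<subseteq> nbrs V E r" "{a, b} \<subseteq> W" using T nb by auto
    then have "card Fr + card {a, b} \<le> deg V E r" unfolding Fr_def by (rule card_out[OF sg])
    then show ?thesis using T(4) by simp
  qed
  have Ur: "{a, b} \<subseteq> nbrs V E r" "\<And>u. u \<in> {a, b} \<Longrightarrow> c0 {r, u} = 0"
    using T nb z1 z2 by (auto simp: insert_commute)
  have f2: "\<And>i j. i \<noteq> j \<Longrightarrow> i \<noteq> 0 \<Longrightarrow> j \<noteq> 0 \<Longrightarrow> cnt V E c0 r i + cnt V E c0 r j + 2 \<le> deg V E r"
  proof -
    fix i j :: nat assume h: "i \<noteq> j" "i \<noteq> 0" "j \<noteq> 0"
    have "cnt V E c0 r i + cnt V E c0 r j + card {a, b} \<le> deg V E r"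
      by (rule fiber2[of V E i j "{a, b}" r c0, OF sg h Ur])
    then show "cnt V E c0 r i + cnt V E c0 r j + 2 \<le> deg V E r" using T(4) by simp
  qed
  have f3: "\<And>i j l. i \<noteq> j \<Longrightarrow> i \<noteq> l \<Longrightarrow> j \<noteq> l \<Longrightarrow> i \<noteq> 0 \<Longrightarrow> j \<noteq> 0 \<Longrightarrow> l \<noteq> 0 \<Longrightarrow>
      cnt V E c0 r i + cnt V E c0 r j + cnt V E c0 r l + 2 \<le> deg V E r"
  proof -
    fix i j l :: nat assume h: "i \<noteq> j" "i \<noteq> l" "j \<noteq> l" "i \<noteq> 0" "j \<noteq> 0" "l \<noteq> 0"
    have "cnt V E c0 r i + cnt V E c0 r j + cnt V E c0 r l + card {a, b} \<le> deg V E r"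
      by (rule fiber3[of V E i j l "{a, b}" r c0, OF sg h Ur])
    then show "cnt V E c0 r i + cnt V E c0 r j + cnt V E c0 r l + 2 \<le> deg V E r" using T(4) by simp
  qed
  have crq: "\<And>i. i \<noteq> 0 \<Longrightarrow> cnt V E c0 r i \<le> cap V E r" using c0(1) TV(2) unfolding pqm_def by blast
  obtain sa where sa: "\<And>i. i \<noteq> 0 \<Longrightarrow> cap V E a \<le> cnt V E c0 a i \<Longrightarrow> i = sa"
    using one_sat[of V E r a c0, OF sg _ z1] Ear nb by blast
  obtain sb where sb: "\<And>i. i \<noteq> 0 \<Longrightarrow> cap V E b \<le> cnt V E c0 b i \<Longrightarrow> i = sb"
    using one_sat[of V E r b c0, OF sg _ z2] Ebr nb by blast
  have KD': "3 * D + 4 \<le> 2 * K" using KD unfolding D_def .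
  have crq': "\<forall>i. i \<noteq> 0 \<longrightarrow> cnt V E c0 r i \<le> cap V E r" using crq by blast
  have f2': "\<forall>i j. i \<noteq> j \<longrightarrow> i \<noteq> 0 \<longrightarrow> j \<noteq> 0 \<longrightarrow> cnt V E c0 r i + cnt V E c0 r j + 2 \<le> deg V E r"
    using f2 by blast
  have f3': "\<forall>i j l. i \<noteq> j \<longrightarrow> i \<noteq> l \<longrightarrow> j \<noteq> l \<longrightarrow> i \<noteq> 0 \<longrightarrow> j \<noteq> 0 \<longrightarrow> l \<noteq> 0 \<longrightarrow>
      cnt V E c0 r i + cnt V E c0 r j + cnt V E c0 r l + 2 \<le> deg V E r"
    using f3 by blast
  obtain x1 x2 where xx: "x1 \<in> {1..K}" "x2 \<in> {1..K}" "Sa + x1 \<notin> Fa" "Sb + x2 \<notin> Fb"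
     "Sr + x1 + x2 \<notin> Fr" "x2 + Sr \<noteq> Sa" "x1 + Sr \<noteq> Sb" "adj \<longrightarrow> Sa + x1 \<noteq> Sb + x2"
     "x1 \<noteq> sa" "x2 \<noteq> sb"
     "\<forall>i. i \<noteq> 0 \<longrightarrow> cnt V E c0 r i + (if i = x1 then 1 else 0) + (if i = x2 then 1 else 0) \<le> cap V E r"
    using joint[where sa=sa and sb=sb and Sa=Sa and Sb=Sb and Sr=Sr and cr="cnt V E c0 r" and capr="cap V E r" and dr="deg V E r", OF KD' fF cFa cFb dr2 degD[OF TV(2)] cFr two_cap crq' f2' f3']
    by (elim exE conjE) (rule that)
  have xx11: "\<And>i. i \<noteq> 0 \<Longrightarrow> cnt V E c0 r i + (if i = x1 then 1 else 0) + (if i = x2 then 1 else 0) \<le> cap V E r"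
    using xx(11) by blast
  define c1 where "c1 = c0({a, r} := x1)"
  define c2 where "c2 = c1({b, r} := x2)"
  have z3: "c1 {b, r} = 0" unfolding c1_def using br_ar z2 by simp
  have sig2: "\<And>t. sigma V E c2 t = sigma V E c0 t + (if t = a \<or> t = r then x1 else 0) + (if t = b \<or> t = r then x2 else 0)"
  proof -
    fix t
    have "sigma V E c2 t = sigma V E c1 t + (if t = b \<or> t = r then x2 else 0)"
      unfolding c2_def by (rule sigma_upd[of V E b r c1 x2 t, OF sg Ebr z3])
    moreover have "sigma V E c1 t = sigma V E c0 t + (if t = a \<or> t = r then x1 else 0)"
      unfolding c1_def by (rule sigma_upd[of V E a r c0 x1 t, OF sg Ear z1])
    ultimately show "sigma V E c2 t = sigma V E c0 t + (if t = a \<or> t = r then x1 else 0) + (if t = b \<or> t = r then x2 else 0)" by simp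
  qed
  have cnt2: "\<And>t i. i \<noteq> 0 \<Longrightarrow> cnt V E c2 t i = cnt V E c0 t i + (if (t = a \<or> t = r) \<and> i = x1 then 1 else 0) + (if (t = b \<or> t = r) \<and> i = x2 then 1 else 0)"
  proof -
    fix t and i :: nat assume i: "i \<noteq> 0"
    have "cnt V E c2 t i = cnt V E c1 t i + (if (t = b \<or> t = r) \<and> i = x2 then 1 else 0)"
      unfolding c2_def by (rule cnt_upd[of V E b r c1 i x2 t, OF sg Ebr z3 i])
    moreover have "cnt V E c1 t i = cnt V E c0 t i + (if (t = a \<or> t = r) \<and> i = x1 then 1 else 0)"
      unfolding c1_def by (rule cnt_upd[of V E a r c0 i x1 t, OF sg Ear z1 i])
    ultimately show "cnt V E c2 t i = cnt V E c0 t i + (if (t = a \<or> t = r) \<and> i = x1 then 1 else 0) + (if (t = b \<or> t = r) \<and> i = x2 then 1 else 0)" by simp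
  qed
  have pq2: "pqm V E c2" unfolding pqm_def
  proof (intro ballI allI impI)
    fix t and i :: nat assume t: "t \<in> V" and i: "i \<noteq> 0"
    have old: "cnt V E c0 t i \<le> cap V E t" using c0(1) t i unfolding pqm_def by blast
    show "cnt V E c2 t i \<le> cap V E t"
    proof (cases "t = r")
      case True
      then show ?thesis using cnt2[OF i] xx11[OF i] by simp
    next
      case tr: False
      show ?thesis
      proof (cases "t = a")
        case True
        have "i = x1 \<Longrightarrow> cnt V E c0 a i < cap V E a" using sa[OF i] xx(9) by (meson not_le)
        then show ?thesis using cnt2[OF i] True T(4) ra old by auto
      next
        case ta: False
        show ?thesis
        proof (cases "t = b")
          case True
          have "i = x2 \<Longrightarrow> cnt V E c0 b i < cap V E b" using sb[OF i] xx(10) by (meson not_le)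
          then show ?thesis using cnt2[OF i] True T(4) rb old by auto
        next
          case False
          then show ?thesis using cnt2[OF i] tr ta old by simp
        qed
      qed
    qed
  qed
  have c2ar: "c2 {a, r} = x1" unfolding c2_def c1_def using br_ar by simp
  have c2br: "c2 {b, r} = x2" unfolding c2_def by simp
  have c2ab: "c2 {a, b} = c0 {a, b}" unfolding c2_def c1_def using br_ab ar_ab by simp
  have mods: "\<And>e. c2 e \<noteq> c e \<Longrightarrow> e = {a, b} \<or> e = {a, r} \<or> e = {b, r}"
    unfolding c2_def c1_def using c0(2) by (metis fun_upd_other)
  have sa2: "sigma V E c2 a = Sa + x1" unfolding Sa_def using sig2[of a] T(4) ra by simp
  have sb2: "sigma V E c2 b = Sb + x2" unfolding Sb_def using sig2[of b] T(4) rb by simp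
  have sr2: "sigma V E c2 r = Sr + x1 + x2" unfolding Sr_def using sig2[of r] by simp
  have so2: "\<And>v. v \<notin> W \<Longrightarrow> sigma V E c2 v = sigma V E c0 v" using sig2 T by auto
  show ?thesis
  proof (rule exI, rule transfer[OF sg iv _ g'])
    show "W - {a, r, b} \<subseteq> W" by blast
  next
    fix e assume "c2 e \<noteq> c e"
    then have "e = {a, b} \<or> e = {a, r} \<or> e = {b, r}" by (rule mods)
    then show "e \<subseteq> W \<and> \<not> e \<subseteq> W - {a, r, b}" using T by auto
  next
    fix u v assume e: "E u v" "u \<in> W" "v \<in> W" "u \<notin> W - {a, r, b} \<or> v \<notin> W - {a, r, b}"
    then have "u \<in> {a, r, b} \<or> v \<in> {a, r, b}" by blast
    then have "{u, v} = {a, r} \<or> {u, v} = {b, r} \<or> ({u, v} = {a, b} \<and> E a b)"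
      using closed_edges[OF sym cl e(1-3)] by blast
    then show "c2 {u, v} \<in> {1..K}" using c2ar c2br c2ab xx(1,2) c0(3) by auto
  next
    show "pqm V E c2" by (rule pq2)
  next
    fix u v assume e: "E u v" "u \<in> W - (W - {a, r, b})" "v \<notin> W - {a, r, b}"
    then have uT: "u = a \<or> u = r \<or> u = b" by blast
    show "sigma V E c2 u \<noteq> sigma V E c2 v"
    proof (cases "v \<in> W")
      case False
      have vn: "v \<in> nbrs V E u - W" using e(1) False nb by simp
      have sv: "sigma V E c2 v = sigma V E c0 v" using so2[OF False] .
      show ?thesis
      proof -
        { assume "u = a"
          then have "sigma V E c0 v \<in> Fa" unfolding Fa_def using vn by blast
          then have ?thesis using xx(3) sa2 sv \<open>u = a\<close> by metis }
        moreover
        { assume "u = b"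
          then have "sigma V E c0 v \<in> Fb" unfolding Fb_def using vn by blast
          then have ?thesis using xx(4) sb2 sv \<open>u = b\<close> by metis }
        moreover
        { assume "u = r"
          then have "sigma V E c0 v \<in> Fr" unfolding Fr_def using vn by blast
          then have ?thesis using xx(5) sr2 sv \<open>u = r\<close> by metis }
        ultimately show ?thesis using uT by blast
      qed
    next
      case True
      then have vT: "v = a \<or> v = r \<or> v = b" using e by blast
      have uv: "u \<noteq> v" using e(1) irr by blast
      have ab: "(u = a \<and> v = b) \<or> (u = b \<and> v = a) \<Longrightarrow> adj" unfolding adj_def using e(1) sym by blast
      show ?thesis using uT vT uv sa2 sb2 sr2 xx(6,7,8) ab by auto
    qed
  qed
qed

lemma main_loop:
  assumes sg: "simple_graph V E" and KD: "3 * max_deg V E + 4 \<le> 2 * K"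
  shows "invr V E K W c \<Longrightarrow> \<exists>c'. invr V E K {} c'"
proof (induction "card W" arbitrary: W c rule: less_induct)
  case less
  have sym: "\<And>u v. E u v \<Longrightarrow> E v u" using sg_sym[OF sg] by blast
  have irr: "\<And>v. \<not> E v v" using sg_irr[OF sg] by blast
  have WV: "W \<subseteq> V" using less.prems unfolding invr_def by blast
  have fW: "finite W" using finite_subset[OF WV sg_fin[OF sg]] .
  have g: "good E W" using less.prems unfolding invr_def by blast
  show ?case
  proof (cases "W = {}")
    case True
    then show ?thesis using less.prems by blast
  next
    case False
    have K2: "max_deg V E + 2 \<le> K" using KD by linarith
    from good_step[OF sym irr fW g False]
    show ?thesis
    proof
      assume "\<exists>w\<in>W. (\<exists>u\<in>W. E w u) \<and> good E (W - {w})"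
      then obtain w p where w: "w \<in> W" "p \<in> W" "E w p" "good E (W - {w})" by blast
      obtain c' where c': "invr V E K (W - {w}) c'" using stepA[OF sg K2 less.prems w] by blast
      have "card (W - {w}) < card W" by (rule card_Diff1_less[OF fW w(1)])
      then show ?thesis using less.hyps c' by blast
    next
      assume "\<exists>a r b. closed3 E W a r b"
      then obtain a r b where cl: "closed3 E W a r b" by blast
      obtain c' where c': "invr V E K (W - {a, r, b}) c'" using stepB[OF sg KD less.prems cl] by blast
      have "a \<in> W" using cl unfolding closed3_def by blast
      have "card (W - {a, r, b}) \<le> card (W - {a})" using fW by (intro card_mono) auto
      also have "card (W - {a}) < card W" by (rule card_Diff1_less[OF fW \<open>a \<in> W\<close>])
      finally have "card (W - {a, r, b}) < card W" .
      then show ?thesis using less.hyps c' by blast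
    qed
  qed
qed

lemma init_inv:
  assumes sg: "simple_graph V E" and nc: "nice V E"
  shows "invr V E K {v \<in> V. \<exists>u. E v u} (\<lambda>_. 0)"
proof -
  let ?W = "{v \<in> V. \<exists>u. E v u}"
  have inW: "\<And>u v. E u v \<Longrightarrow> u \<in> ?W \<and> v \<in> ?W" using sg_V[OF sg] sg_sym[OF sg] by blast
  have wn_eq: "\<And>x. wn E ?W x = nbrs V E x" unfolding wn_def nbrs_def using inW by auto
  have g: "good E ?W" unfolding good_def
  proof (intro conjI ballI allI impI)
    fix w assume "w \<in> ?W"
    then obtain u where "E w u" by blast
    then show "\<exists>u\<in>?W. E w u" using inW by blast
  next
    fix x y assume "x \<in> ?W" "y \<in> ?W" "E x y"
    then show "\<not> (card (wn E ?W x) = 1 \<and> card (wn E ?W y) = 1)"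
      using nc unfolding nice_def wn_eq deg_def by blast
  qed
  have pq: "pqm V E (\<lambda>_. 0)" unfolding pqm_def cnt_def by simp
  show ?thesis unfolding invr_def using g pq inW by auto
qed

theorem mainTheorem7:
  fixes V :: "'a set" and E :: "'a \<Rightarrow> 'a \<Rightarrow> bool"
  assumes "simple_graph V E" and "nice V E"
  shows "(\<exists>k. qm_nsd_colorable V E k) \<and>
         real (chi_qm_sigma V E) \<le> real_of_int \<lceil>(3 * real (max_deg V E) + 4) / 2\<rceil>"
proof -
  note sg = assms(1)
  define D where "D = max_deg V E"
  define z where "z = \<lceil>(3 * real D + 4) / 2\<rceil>"
  define K where "K = nat z"
  have z0: "z \<ge> 0" unfolding z_def by simp
  have rK: "real K = real_of_int z" unfolding K_def using z0 by simp
  have "real_of_int z \<ge> (3 * real D + 4) / 2" unfolding z_def by (rule le_of_int_ceiling)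
  then have "real (3 * D + 4) \<le> real (2 * K)" using rK by simp
  then have KD: "3 * max_deg V E + 4 \<le> 2 * K" unfolding D_def by (simp only: of_nat_le_iff)
  obtain c where c: "invr V E K {} c" using main_loop[OF sg KD init_inv[OF sg assms(2)]] by blast
  have col: "\<And>u v. E u v \<Longrightarrow> c {u, v} \<in> {1..K}" using c unfolding invr_def by blast
  have pq: "pqm V E c" using c unfolding invr_def by blast
  have sd: "\<And>u v. E u v \<Longrightarrow> sigma V E c u \<noteq> sigma V E c v" using c unfolding invr_def by blast
  have ec: "edge_coloring V E K c" unfolding edge_coloring_def edges_def using col by blast
  have qm: "quasi_majority V E c" unfolding quasi_majority_def
  proof (intro ballI allI)
    fix v i assume v: "v \<in> V"
    show "card {u \<in> nbrs V E v. c {v, u} = i} \<le> nat \<lceil>real (deg V E v) / 2\<rceil>"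
    proof (cases "i = 0")
      case True
      have "{u \<in> nbrs V E v. c {v, u} = i} = {}" using True col nbrs_iff[OF sg] by fastforce
      then have "card {u \<in> nbrs V E v. c {v, u} = i} = 0" by (simp only: card.empty)
      then show ?thesis by linarith
    next
      case False
      then have "cnt V E c v i \<le> cap V E v" using pq v unfolding pqm_def by blast
      then show ?thesis unfolding cnt_def cap_def cap_eq .
    qed
  qed
  have ns: "nsd V E c" unfolding nsd_def using sd by blast
  have colK: "qm_nsd_colorable V E K" unfolding qm_nsd_colorable_def using ec qm ns by blast
  have "chi_qm_sigma V E \<le> K" unfolding chi_qm_sigma_def using colK by (rule Least_le)
  then have "real (chi_qm_sigma V E) \<le> real K" by (simp only: of_nat_le_iff)
  then have "real (chi_qm_sigma V E) \<le> real_of_int z" using rK by (simp only:)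
  then have "real (chi_qm_sigma V E) \<le> real_of_int \<lceil>(3 * real (max_deg V E) + 4) / 2\<rceil>" unfolding z_def D_def .
  then show ?thesis using colK by blast
qed

end
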